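(* Let $R$ be a commutative Noetherian ring, $I$ an ideal of $R$, and $M$ an $R$-module such that $\operatorname{Tor}^R_i(R/I,M)=0$ for all integers $i\geq 0$. Then $\operatorname{Hom}_R(R/I,M)=0$. *)

theory Defs
  imports "HOL-Algebra.Algebra" "HOL-Algebra.Module" "HOL-Algebra.QuotRing" "HOL-Algebra.Ring_Divisibility"
begin

text \<open>Finite vectors (elements of N^n) with entries in the carrier of an abelian group N,
  represented as functions nat => 'b that are zero outside the index range.\<close>
definition vecs :: "('b, 'm) ring_scheme \<Rightarrow> nat \<Rightarrow> (nat \<Rightarrow> 'b) set" where
  "vecs N n = {v. (\<forall>j<n. v j \<in> carrier N) \<and> (\<forall>j\<ge>n. v j = \<zero>\<^bsub>N\<^esub>)}"

definition mat_act :: "('b, 'm) ring_scheme \<Rightarrow> ('a \<Rightarrow> 'b \<Rightarrow> 'b) \<Rightarrow> (nat \<Rightarrow> nat \<Rightarrow> 'a)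
    \<Rightarrow> nat \<Rightarrow> nat \<Rightarrow> (nat \<Rightarrow> 'b) \<Rightarrow> (nat \<Rightarrow> 'b)" where
  "mat_act N act A p q v =
     (\<lambda>j. if j < p then finsum N (\<lambda>k. act (A j k) (v k)) {..<q} else \<zero>\<^bsub>N\<^esub>)"

text \<open>A resolution of R/I by finitely generated free R-modules
  ... -> R^(n 2) --d 2--> R^(n 1) --d 1--> R^(n 0) = R -> R/I -> 0,
  where d i is an (n (i-1)) x (n i) matrix over R.
  Exactness at R/I is automatic (quotient map), exactness at R means im(d 1) = I,
  exactness at R^(n i), i >= 1, means ker(d i) = im(d (i+1)).\<close>
definition finite_free_resolution ::
  "('a, 'c) ring_scheme \<Rightarrow> 'a set \<Rightarrow> (nat \<Rightarrow> nat) \<Rightarrow> (nat \<Rightarrow> nat \<Rightarrow> nat \<Rightarrow> 'a) \<Rightarrow> bool" where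
  "finite_free_resolution R I n d \<longleftrightarrow>
     n 0 = 1 \<and>
     (\<forall>i\<ge>1. \<forall>j<n (i - 1). \<forall>k<n i. d i j k \<in> carrier R) \<and>
     mat_act R (monoid.mult R) (d 1) 1 (n 1) ` vecs R (n 1) = {v \<in> vecs R 1. v 0 \<in> I} \<and>
     (\<forall>i\<ge>1. {x \<in> vecs R (n i). mat_act R (monoid.mult R) (d i) (n (i - 1)) (n i) x = (\<lambda>_. \<zero>\<^bsub>R\<^esub>)}
              = mat_act R (monoid.mult R) (d (Suc i)) (n i) (n (Suc i)) ` vecs R (n (Suc i)))"

text \<open>Tor_i^R(R/I, M) = 0, computed as the i-th homology of the complex F \<otimes>_R M, where
  F is the given finite free resolution of R/I; F_i \<otimes>_R M = M^(n i) and d i \<otimes> M acts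
  by the same matrix.  Tor_0 = M / im(d 1 \<otimes> M).\<close>
definition Tor_zero_wrt ::
  "('a, 'c) ring_scheme \<Rightarrow> ('a, 'b, 'd) module_scheme \<Rightarrow> (nat \<Rightarrow> nat)
     \<Rightarrow> (nat \<Rightarrow> nat \<Rightarrow> nat \<Rightarrow> 'a) \<Rightarrow> nat \<Rightarrow> bool" where
  "Tor_zero_wrt R M n d i \<longleftrightarrow>
     (if i = 0 then mat_act M (smult M) (d 1) 1 (n 1) ` vecs M (n 1) = vecs M 1
      else {x \<in> vecs M (n i). mat_act M (smult M) (d i) (n (i - 1)) (n i) x = (\<lambda>_. \<zero>\<^bsub>M\<^esub>)}
             = mat_act M (smult M) (d (Suc i)) (n i) (n (Suc i)) ` vecs M (n (Suc i)))"

text \<open>Tor_i^R(R/I, M) = 0 for all i >= 0.  Since Tor is independent of the chosen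
  resolution, this is the vanishing of homology for some finite free resolution of R/I.\<close>
definition Tor_all_vanish ::
  "('a, 'c) ring_scheme \<Rightarrow> 'a set \<Rightarrow> ('a, 'b, 'd) module_scheme \<Rightarrow> bool" where
  "Tor_all_vanish R I M \<longleftrightarrow>
     (\<exists>n d. finite_free_resolution R I n d \<and> (\<forall>i::nat. Tor_zero_wrt R M n d i))"

text \<open>Hom_R(R/I, M): R-linear maps from the R-module R/I (= R Quot I, with r . X = (I +> r) X)
  to M.\<close>
definition Hom_quot ::
  "('a, 'c) ring_scheme \<Rightarrow> 'a set \<Rightarrow> ('a, 'b, 'd) module_scheme \<Rightarrow> ('a set \<Rightarrow> 'b) set" where
  "Hom_quot R I M = {f. f \<in> carrier (R Quot I) \<rightarrow> carrier M \<and>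
      (\<forall>xa\<in>carrier (R Quot I). \<forall>ya\<in>carrier (R Quot I).
          f (xa \<oplus>\<^bsub>(R Quot I)\<^esub> ya) = f xa \<oplus>\<^bsub>M\<^esub> f ya) \<and>
      (\<forall>r\<in>carrier R. \<forall>xa\<in>carrier (R Quot I).
          f ((I +>\<^bsub>R\<^esub> r) \<otimes>\<^bsub>(R Quot I)\<^esub> xa) = r \<odot>\<^bsub>M\<^esub> f xa)}"

end

theory Submission
  imports Defs
begin

definition sgm :: "('a,'b,'d) module_scheme \<Rightarrow> bool \<Rightarrow> 'b \<Rightarrow> 'b" where
  "sgm M b m = (if b then m else \<ominus>\<^bsub>M\<^esub> m)"

context module begin

lemma sgm_closed[simp]: "m \<in> carrier M \<Longrightarrow> sgm M b m \<in> carrier M"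
  by (simp add: sgm_def)

lemma sgm_sgm: "m \<in> carrier M \<Longrightarrow> sgm M b (sgm M b' m) = sgm M (b = b') m"
  by (simp add: sgm_def)

lemma sgm_zero[simp]: "sgm M b \<zero>\<^bsub>M\<^esub> = \<zero>\<^bsub>M\<^esub>"
  by (simp add: sgm_def)

lemma smult_sgm: "a \<in> carrier R \<Longrightarrow> m \<in> carrier M \<Longrightarrow> a \<odot>\<^bsub>M\<^esub> sgm M b m = sgm M b (a \<odot>\<^bsub>M\<^esub> m)"
  by (simp add: sgm_def smult_r_minus)

lemma sgm_add: "m \<in> carrier M \<Longrightarrow> m' \<in> carrier M \<Longrightarrow> sgm M b (m \<oplus>\<^bsub>M\<^esub> m') = sgm M b m \<oplus>\<^bsub>M\<^esub> sgm M b m'"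
  by (simp add: sgm_def M.minus_add)

lemma sgm_neg: "m \<in> carrier M \<Longrightarrow> sgm M b (\<ominus>\<^bsub>M\<^esub> m) = \<ominus>\<^bsub>M\<^esub> (sgm M b m)"
  by (simp add: sgm_def)

lemma sgm_cancel: "m \<in> carrier M \<Longrightarrow> sgm M b m \<oplus>\<^bsub>M\<^esub> sgm M (\<not> b) m = \<zero>\<^bsub>M\<^esub>"
  by (simp add: sgm_def M.r_neg M.l_neg)

lemma finsum_neg:
  assumes "finite A" "f \<in> A \<rightarrow> carrier M"
  shows "\<ominus>\<^bsub>M\<^esub> (\<Oplus>\<^bsub>M\<^esub> i\<in>A. f i) = (\<Oplus>\<^bsub>M\<^esub> i\<in>A. \<ominus>\<^bsub>M\<^esub> f i)"
  using assms
proof (induct set: finite)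
  case empty then show ?case by simp
next
  case (insert a A)
  then show ?case by (simp add: Pi_def M.minus_add M.finsum_closed)
qed

lemma finsum_sgm:
  assumes "finite A" "f \<in> A \<rightarrow> carrier M"
  shows "sgm M b (\<Oplus>\<^bsub>M\<^esub> i\<in>A. f i) = (\<Oplus>\<^bsub>M\<^esub> i\<in>A. sgm M b (f i))"
  using assms by (simp add: sgm_def finsum_neg)

lemma finsum_swap:
  assumes "finite A" "finite B" "\<And>i j. i \<in> A \<Longrightarrow> j \<in> B \<Longrightarrow> f i j \<in> carrier M"
  shows "(\<Oplus>\<^bsub>M\<^esub> i\<in>A. \<Oplus>\<^bsub>M\<^esub> j\<in>B. f i j) = (\<Oplus>\<^bsub>M\<^esub> j\<in>B. \<Oplus>\<^bsub>M\<^esub> i\<in>A. f i j)"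
  using assms
proof (induct set: finite)
  case empty then show ?case by (simp add: M.finsum_zero)
next
  case (insert a A)
  have "(\<Oplus>\<^bsub>M\<^esub> j\<in>B. \<Oplus>\<^bsub>M\<^esub> i\<in>insert a A. f i j) = (\<Oplus>\<^bsub>M\<^esub> j\<in>B. f a j \<oplus>\<^bsub>M\<^esub> (\<Oplus>\<^bsub>M\<^esub> i\<in>A. f i j))"
    using insert by (intro M.finsum_cong') (auto simp: Pi_def)
  also have "\<dots> = (\<Oplus>\<^bsub>M\<^esub> j\<in>B. f a j) \<oplus>\<^bsub>M\<^esub> (\<Oplus>\<^bsub>M\<^esub> j\<in>B. \<Oplus>\<^bsub>M\<^esub> i\<in>A. f i j)"
    using insert by (intro M.finsum_addf) (auto simp: Pi_def intro!: M.finsum_closed)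
  also have "(\<Oplus>\<^bsub>M\<^esub> j\<in>B. \<Oplus>\<^bsub>M\<^esub> i\<in>A. f i j) = (\<Oplus>\<^bsub>M\<^esub> i\<in>A. \<Oplus>\<^bsub>M\<^esub> j\<in>B. f i j)"
    using insert by simp
  also have "(\<Oplus>\<^bsub>M\<^esub> j\<in>B. f a j) \<oplus>\<^bsub>M\<^esub> (\<Oplus>\<^bsub>M\<^esub> i\<in>A. \<Oplus>\<^bsub>M\<^esub> j\<in>B. f i j)
     = (\<Oplus>\<^bsub>M\<^esub> i\<in>insert a A. \<Oplus>\<^bsub>M\<^esub> j\<in>B. f i j)"
    using insert by (subst M.finsum_insert) (auto intro!: M.finsum_closed)
  finally show ?case by simp
qed

lemma finsum_antisym:
  assumes "finite A" "\<And>i j. i \<in> A \<Longrightarrow> j \<in> A \<Longrightarrow> g i j \<in> carrier M"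
    "\<And>i. i \<in> A \<Longrightarrow> g i i = \<zero>\<^bsub>M\<^esub>"
    "\<And>i j. i \<in> A \<Longrightarrow> j \<in> A \<Longrightarrow> g i j = \<ominus>\<^bsub>M\<^esub> g j i"
  shows "(\<Oplus>\<^bsub>M\<^esub> i\<in>A. \<Oplus>\<^bsub>M\<^esub> j\<in>A. g i j) = \<zero>\<^bsub>M\<^esub>"
  using assms
proof (induct set: finite)
  case empty show ?case by simp
next
  case (insert a A)
  have c: "\<And>i j. i \<in> insert a A \<Longrightarrow> j \<in> insert a A \<Longrightarrow> g i j \<in> carrier M" using insert(4) by blast
  have IH: "(\<Oplus>\<^bsub>M\<^esub> i\<in>A. \<Oplus>\<^bsub>M\<^esub> j\<in>A. g i j) = \<zero>\<^bsub>M\<^esub>"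
    using insert(3)[OF c insert(5) insert(6)] by blast
  have cA: "\<And>i. i \<in> insert a A \<Longrightarrow> (\<lambda>j. g i j) \<in> A \<rightarrow> carrier M" using c by blast
  have s1: "\<And>i. i \<in> insert a A \<Longrightarrow> (\<Oplus>\<^bsub>M\<^esub> j\<in>insert a A. g i j) = g i a \<oplus>\<^bsub>M\<^esub> (\<Oplus>\<^bsub>M\<^esub> j\<in>A. g i j)"
    using insert(1,2) c cA by (subst M.finsum_insert) auto
  have "(\<Oplus>\<^bsub>M\<^esub> i\<in>insert a A. \<Oplus>\<^bsub>M\<^esub> j\<in>insert a A. g i j)
     = (\<Oplus>\<^bsub>M\<^esub> i\<in>insert a A. g i a \<oplus>\<^bsub>M\<^esub> (\<Oplus>\<^bsub>M\<^esub> j\<in>A. g i j))"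
    apply (rule M.finsum_cong') using s1 cA c by (auto intro!: M.finsum_closed)
  also have "\<dots> = (\<Oplus>\<^bsub>M\<^esub> i\<in>insert a A. g i a) \<oplus>\<^bsub>M\<^esub> (\<Oplus>\<^bsub>M\<^esub> i\<in>insert a A. \<Oplus>\<^bsub>M\<^esub> j\<in>A. g i j)"
    apply (rule M.finsum_addf) using cA c by (auto intro!: M.finsum_closed)
  also have "(\<Oplus>\<^bsub>M\<^esub> i\<in>insert a A. g i a) = g a a \<oplus>\<^bsub>M\<^esub> (\<Oplus>\<^bsub>M\<^esub> i\<in>A. g i a)"
    apply (rule M.finsum_insert) using insert(1,2) c by auto
  also have "(\<Oplus>\<^bsub>M\<^esub> i\<in>insert a A. \<Oplus>\<^bsub>M\<^esub> j\<in>A. g i j)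
      = (\<Oplus>\<^bsub>M\<^esub> j\<in>A. g a j) \<oplus>\<^bsub>M\<^esub> (\<Oplus>\<^bsub>M\<^esub> i\<in>A. \<Oplus>\<^bsub>M\<^esub> j\<in>A. g i j)"
    apply (rule M.finsum_insert) using insert(1,2) cA by (auto intro!: M.finsum_closed)
  also note IH
  also have "(\<Oplus>\<^bsub>M\<^esub> j\<in>A. g a j) = \<ominus>\<^bsub>M\<^esub> (\<Oplus>\<^bsub>M\<^esub> i\<in>A. g i a)"
  proof -
    have "(\<Oplus>\<^bsub>M\<^esub> j\<in>A. g a j) = (\<Oplus>\<^bsub>M\<^esub> j\<in>A. \<ominus>\<^bsub>M\<^esub> g j a)"
    proof (rule M.finsum_cong'[OF refl])
      show "(\<lambda>j. \<ominus>\<^bsub>M\<^esub> g j a) \<in> A \<rightarrow> carrier M" using c by blast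
      fix j assume "j \<in> A"
      then show "g a j = \<ominus>\<^bsub>M\<^esub> g j a" by (intro insert(6)) auto
    qed
    also have "\<dots> = \<ominus>\<^bsub>M\<^esub> (\<Oplus>\<^bsub>M\<^esub> i\<in>A. g i a)"
      apply (rule finsum_neg[symmetric]) using insert(1) c by auto
    finally show ?thesis .
  qed
  finally have e: "(\<Oplus>\<^bsub>M\<^esub> i\<in>insert a A. \<Oplus>\<^bsub>M\<^esub> j\<in>insert a A. g i j)
     = (g a a \<oplus>\<^bsub>M\<^esub> (\<Oplus>\<^bsub>M\<^esub> i\<in>A. g i a)) \<oplus>\<^bsub>M\<^esub> (\<ominus>\<^bsub>M\<^esub> (\<Oplus>\<^bsub>M\<^esub> i\<in>A. g i a) \<oplus>\<^bsub>M\<^esub> \<zero>\<^bsub>M\<^esub>)" .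
  have z: "(\<Oplus>\<^bsub>M\<^esub> i\<in>A. g i a) \<in> carrier M" using c by (intro M.finsum_closed) auto
  show ?case unfolding e insert(5)[OF insertI1] using z by (simp add: M.r_neg)
qed
lemma smult_comm: "a \<in> carrier R \<Longrightarrow> b \<in> carrier R \<Longrightarrow> m \<in> carrier M \<Longrightarrow>
   a \<odot>\<^bsub>M\<^esub> (b \<odot>\<^bsub>M\<^esub> m) = b \<odot>\<^bsub>M\<^esub> (a \<odot>\<^bsub>M\<^esub> m)"
proof -
  assume h: "a \<in> carrier R" "b \<in> carrier R" "m \<in> carrier M"
  have "a \<odot>\<^bsub>M\<^esub> (b \<odot>\<^bsub>M\<^esub> m) = (a \<otimes> b) \<odot>\<^bsub>M\<^esub> m" using h by (simp add: smult_assoc1)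
  also have "a \<otimes> b = b \<otimes> a" using h by (simp add: m_comm)
  also have "(b \<otimes> a) \<odot>\<^bsub>M\<^esub> m = b \<odot>\<^bsub>M\<^esub> (a \<odot>\<^bsub>M\<^esub> m)" using h by (simp add: smult_assoc1)
  finally show ?thesis .
qed

lemma finsum_smult_rdistr:
  assumes "finite A" "f \<in> A \<rightarrow> carrier R" "m \<in> carrier M"
  shows "(\<Oplus> i\<in>A. f i) \<odot>\<^bsub>M\<^esub> m = (\<Oplus>\<^bsub>M\<^esub> i\<in>A. f i \<odot>\<^bsub>M\<^esub> m)"
  using assms
proof (induct set: finite)
  case empty then show ?case by simp
next
  case (insert a A)
  then show ?case by (simp add: Pi_def smult_l_distr R.finsum_closed)
qed

end

definition sg :: "nat \<Rightarrow> nat set \<Rightarrow> bool" where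
  "sg j T = even (card {i\<in>T. i < j})"

definition kd :: "('a,'b,'d) module_scheme \<Rightarrow> nat \<Rightarrow> (nat \<Rightarrow> 'a) \<Rightarrow> (nat set \<Rightarrow> 'b) \<Rightarrow> nat set \<Rightarrow> 'b" where
  "kd M s x c T = (if T \<subseteq> {..<s} then
      (\<Oplus>\<^bsub>M\<^esub> j\<in>{..<s} - T. sgm M (sg j T) (x j \<odot>\<^bsub>M\<^esub> c (insert j T))) else \<zero>\<^bsub>M\<^esub>)"

definition hj :: "('a,'b,'d) module_scheme \<Rightarrow> nat \<Rightarrow> (nat set \<Rightarrow> 'b) \<Rightarrow> nat set \<Rightarrow> 'b" where
  "hj M j c T = (if j \<in> T then sgm M (sg j (T - {j})) (c (T - {j})) else \<zero>\<^bsub>M\<^esub>)"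

definition cvec :: "('a,'b,'d) module_scheme \<Rightarrow> nat \<Rightarrow> nat \<Rightarrow> (nat set \<Rightarrow> 'b) set" where
  "cvec M s q = {c. (\<forall>S. c S \<in> carrier M) \<and> (\<forall>S. c S \<noteq> \<zero>\<^bsub>M\<^esub> \<longrightarrow> S \<subseteq> {..<s} \<and> card S = q)}"

lemma sg_insert:
  assumes "finite T" "i \<notin> T"
  shows "sg j (insert i T) = (if i < j then \<not> sg j T else sg j T)"
proof -
  have "{k\<in>insert i T. k < j} = (if i < j then insert i {k\<in>T. k < j} else {k\<in>T. k < j})" by auto
  then show ?thesis using assms by (simp add: sg_def)
qed

locale kos = module R M for R :: "('a,'c) ring_scheme" and M :: "('a,'b,'d) module_scheme" +
  fixes s :: nat and x :: "nat \<Rightarrow> 'a"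
  assumes x_closed: "\<And>j. j < s \<Longrightarrow> x j \<in> carrier R"
begin

lemma kd_closed: "(\<And>S. c S \<in> carrier M) \<Longrightarrow> kd M s x c T \<in> carrier M"
  unfolding kd_def by (auto intro!: M.finsum_closed simp: x_closed)

lemma kd_cong: "(\<And>S. S \<subseteq> {..<s} \<Longrightarrow> c S = c' S) \<Longrightarrow> (\<And>S. c' S \<in> carrier M) \<Longrightarrow> kd M s x c T = kd M s x c' T"
  unfolding kd_def by (auto intro!: M.finsum_cong' simp: x_closed)

lemma kd_add:
  assumes "\<And>S. c S \<in> carrier M" "\<And>S. c' S \<in> carrier M"
  shows "kd M s x (\<lambda>S. c S \<oplus>\<^bsub>M\<^esub> c' S) T = kd M s x c T \<oplus>\<^bsub>M\<^esub> kd M s x c' T"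
proof (cases "T \<subseteq> {..<s}")
  case True
  have "kd M s x (\<lambda>S. c S \<oplus>\<^bsub>M\<^esub> c' S) T = (\<Oplus>\<^bsub>M\<^esub> j\<in>{..<s} - T.
      sgm M (sg j T) (x j \<odot>\<^bsub>M\<^esub> c (insert j T)) \<oplus>\<^bsub>M\<^esub> sgm M (sg j T) (x j \<odot>\<^bsub>M\<^esub> c' (insert j T)))"
    unfolding kd_def using True assms
    by (simp, intro M.finsum_cong'[OF refl]) (auto simp: smult_r_distr sgm_add x_closed)
  also have "\<dots> = kd M s x c T \<oplus>\<^bsub>M\<^esub> kd M s x c' T"
    unfolding kd_def using True assms by (simp add: M.finsum_addf x_closed)
  finally show ?thesis .
qed (simp add: kd_def)

lemma kd_smult:
  assumes "\<And>S. c S \<in> carrier M" "a \<in> carrier R"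
  shows "kd M s x (\<lambda>S. a \<odot>\<^bsub>M\<^esub> c S) T = a \<odot>\<^bsub>M\<^esub> kd M s x c T"
proof (cases "T \<subseteq> {..<s}")
  case True
  have "kd M s x (\<lambda>S. a \<odot>\<^bsub>M\<^esub> c S) T = (\<Oplus>\<^bsub>M\<^esub> j\<in>{..<s} - T.
      a \<odot>\<^bsub>M\<^esub> sgm M (sg j T) (x j \<odot>\<^bsub>M\<^esub> c (insert j T)))"
    unfolding kd_def using True assms
    by (auto intro!: M.finsum_cong' simp: smult_sgm smult_comm x_closed)
  also have "\<dots> = a \<odot>\<^bsub>M\<^esub> kd M s x c T"
    unfolding kd_def using True assms by (simp add: finsum_smult_ldistr x_closed)
  finally show ?thesis .
qed (simp add: kd_def assms)

lemma kd_sgm: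
  assumes "\<And>S. c S \<in> carrier M"
  shows "kd M s x (\<lambda>S. sgm M b (c S)) T = sgm M b (kd M s x c T)"
proof (cases "T \<subseteq> {..<s}")
  case True
  have "kd M s x (\<lambda>S. sgm M b (c S)) T = (\<Oplus>\<^bsub>M\<^esub> j\<in>{..<s} - T.
      sgm M b (sgm M (sg j T) (x j \<odot>\<^bsub>M\<^esub> c (insert j T))))"
    unfolding kd_def using True assms
    by (simp, intro M.finsum_cong'[OF refl]) (auto simp: smult_sgm sgm_def x_closed smult_r_minus)
  also have "\<dots> = sgm M b (kd M s x c T)"
    unfolding kd_def using True assms by (simp add: finsum_sgm x_closed)
  finally show ?thesis .
qed (simp add: kd_def)

lemma kd_zero: "kd M s x (\<lambda>S. \<zero>\<^bsub>M\<^esub>) T = \<zero>\<^bsub>M\<^esub>"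
proof -
  have "\<And>T. (\<Oplus>\<^bsub>M\<^esub> j\<in>{..<s} - T. sgm M (sg j T) (x j \<odot>\<^bsub>M\<^esub> \<zero>\<^bsub>M\<^esub>)) = (\<Oplus>\<^bsub>M\<^esub> j\<in>{..<s} - T. \<zero>\<^bsub>M\<^esub>)"
    by (intro M.finsum_cong'[OF refl]) (auto simp: x_closed)
  then show ?thesis unfolding kd_def by simp
qed

lemma kd_finsum:
  assumes "finite B" "\<And>k S. k \<in> B \<Longrightarrow> f k S \<in> carrier M"
  shows "kd M s x (\<lambda>S. \<Oplus>\<^bsub>M\<^esub> k\<in>B. f k S) T = (\<Oplus>\<^bsub>M\<^esub> k\<in>B. kd M s x (f k) T)"
proof (cases "T \<subseteq> {..<s}")
  case True
  have "kd M s x (\<lambda>S. \<Oplus>\<^bsub>M\<^esub> k\<in>B. f k S) T = (\<Oplus>\<^bsub>M\<^esub> j\<in>{..<s} - T.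
      \<Oplus>\<^bsub>M\<^esub> k\<in>B. sgm M (sg j T) (x j \<odot>\<^bsub>M\<^esub> f k (insert j T)))"
    unfolding kd_def using True assms
    by (auto intro!: M.finsum_cong' simp: finsum_sgm finsum_smult_ldistr x_closed Pi_def)
  also have "\<dots> = (\<Oplus>\<^bsub>M\<^esub> k\<in>B. kd M s x (f k) T)"
    unfolding kd_def using True assms by (subst finsum_swap) (auto simp: x_closed)
  finally show ?thesis .
qed (simp add: kd_def)

end

context module begin
lemma sgm_not: "m \<in> carrier M \<Longrightarrow> sgm M (\<not> b) m = \<ominus>\<^bsub>M\<^esub> sgm M b m"
  by (simp add: sgm_def M.minus_minus)

lemma sum_zero_neg: "a \<in> carrier M \<Longrightarrow> b \<in> carrier M \<Longrightarrow> a \<oplus>\<^bsub>M\<^esub> b = \<zero>\<^bsub>M\<^esub> \<Longrightarrow> b = \<ominus>\<^bsub>M\<^esub> a"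
proof -
  assume h: "a \<in> carrier M" "b \<in> carrier M" "a \<oplus>\<^bsub>M\<^esub> b = \<zero>\<^bsub>M\<^esub>"
  then have "b \<oplus>\<^bsub>M\<^esub> a = \<zero>\<^bsub>M\<^esub>" by (simp add: M.a_comm)
  then show ?thesis using h by (intro M.minus_equality[symmetric])
qed

lemma minus_zero_M[simp]: "\<ominus>\<^bsub>M\<^esub> \<zero>\<^bsub>M\<^esub> = \<zero>\<^bsub>M\<^esub>"
  by (rule M.minus_equality) simp_all

lemma finsum_single:
  assumes "finite B" "j \<in> B" "f \<in> B \<rightarrow> carrier M" "\<And>i. i \<in> B \<Longrightarrow> i \<noteq> j \<Longrightarrow> f i = \<zero>\<^bsub>M\<^esub>"
  shows "(\<Oplus>\<^bsub>M\<^esub> i\<in>B. f i) = f j"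
proof -
  have B: "B = insert j (B - {j})" using assms by blast
  have "(\<Oplus>\<^bsub>M\<^esub> i\<in>B. f i) = f j \<oplus>\<^bsub>M\<^esub> (\<Oplus>\<^bsub>M\<^esub> i\<in>B - {j}. f i)"
    by (subst B, subst M.finsum_insert) (use assms in auto)
  also have "(\<Oplus>\<^bsub>M\<^esub> i\<in>B - {j}. f i) = (\<Oplus>\<^bsub>M\<^esub> i\<in>B - {j}. \<zero>\<^bsub>M\<^esub>)"
    by (intro M.finsum_cong') (use assms in auto)
  also have "(\<Oplus>\<^bsub>M\<^esub> i\<in>B - {j}. \<zero>\<^bsub>M\<^esub>) = \<zero>\<^bsub>M\<^esub>" by simp
  finally show ?thesis using assms(2,3) by (simp add: Pi_def)
qed
end

lemma sg_pair:
  assumes "finite T" "i \<notin> T" "j \<notin> T" "i \<noteq> j"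
  shows "(sg j T = sg i (insert j T)) = (\<not> (sg i T = sg j (insert i T)))"
  using assms by (auto simp: sg_insert)

context kos begin

lemma kd_kd:
  assumes c: "\<And>S. c S \<in> carrier M"
  shows "kd M s x (kd M s x c) T = \<zero>\<^bsub>M\<^esub>"
proof (cases "T \<subseteq> {..<s}")
  case False then show ?thesis by (simp add: kd_def)
next
  case True
  define B where "B = {..<s} - T"
  have fB: "finite B" by (simp add: B_def)
  have fT: "finite T" using True finite_subset by blast
  define G where "G j i = (if i = j then \<zero>\<^bsub>M\<^esub> else
       sgm M (sg i (insert j T)) (x i \<odot>\<^bsub>M\<^esub> c (insert i (insert j T))))" for j i
  have xB: "\<And>i. i \<in> B \<Longrightarrow> x i \<in> carrier R" by (auto simp: B_def x_closed)
  have Gc: "\<And>j i. i \<in> B \<Longrightarrow> G j i \<in> carrier M" by (auto simp: G_def xB c)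
  have inner: "kd M s x c (insert j T) = (\<Oplus>\<^bsub>M\<^esub> i\<in>B. G j i)" if j: "j \<in> B" for j
  proof -
    have "(\<Oplus>\<^bsub>M\<^esub> i\<in>B. G j i) = (\<Oplus>\<^bsub>M\<^esub> i\<in>insert j (B - {j}). G j i)"
      using j by (metis insert_Diff)
    also have "\<dots> = G j j \<oplus>\<^bsub>M\<^esub> (\<Oplus>\<^bsub>M\<^esub> i\<in>B - {j}. G j i)"
      by (rule M.finsum_insert) (use fB Gc j in auto)
    also have "(\<Oplus>\<^bsub>M\<^esub> i\<in>B - {j}. G j i) = (\<Oplus>\<^bsub>M\<^esub> i\<in>{..<s} - insert j T.
         sgm M (sg i (insert j T)) (x i \<odot>\<^bsub>M\<^esub> c (insert i (insert j T))))"
    proof -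
      have "B - {j} = {..<s} - insert j T" by (auto simp: B_def)
      then show ?thesis
      proof (rule M.finsum_cong')
        show "(\<lambda>i. sgm M (sg i (insert j T)) (x i \<odot>\<^bsub>M\<^esub> c (insert i (insert j T)))) \<in> {..<s} - insert j T \<rightarrow> carrier M"
          using x_closed c by auto
        fix i assume "i \<in> {..<s} - insert j T"
        then have "i \<noteq> j" by blast
        then show "G j i = sgm M (sg i (insert j T)) (x i \<odot>\<^bsub>M\<^esub> c (insert i (insert j T)))"
          by (simp add: G_def)
      qed
    qed
    also have "\<dots> = kd M s x c (insert j T)"
      using True j by (simp add: kd_def B_def)
    finally show ?thesis using kd_closed[OF c] by (simp add: G_def)
  qed
  define g where "g j i = sgm M (sg j T) (x j \<odot>\<^bsub>M\<^esub> G j i)" for j i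
  have gc: "\<And>j i. j \<in> B \<Longrightarrow> i \<in> B \<Longrightarrow> g j i \<in> carrier M" by (auto simp: g_def xB Gc)
  have "kd M s x (kd M s x c) T = (\<Oplus>\<^bsub>M\<^esub> j\<in>B. sgm M (sg j T) (x j \<odot>\<^bsub>M\<^esub> kd M s x c (insert j T)))"
    using True by (simp add: kd_def B_def)
  also have "\<dots> = (\<Oplus>\<^bsub>M\<^esub> j\<in>B. \<Oplus>\<^bsub>M\<^esub> i\<in>B. g j i)"
  proof (rule M.finsum_cong'[OF refl])
    show "(\<lambda>j. \<Oplus>\<^bsub>M\<^esub> i\<in>B. g j i) \<in> B \<rightarrow> carrier M" using gc by (auto intro!: M.finsum_closed)
    fix j assume j: "j \<in> B"
    have "sgm M (sg j T) (x j \<odot>\<^bsub>M\<^esub> kd M s x c (insert j T)) = sgm M (sg j T) (\<Oplus>\<^bsub>M\<^esub> i\<in>B. x j \<odot>\<^bsub>M\<^esub> G j i)"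
      using j fB Gc xB by (simp add: inner finsum_smult_ldistr Pi_def)
    also have "\<dots> = (\<Oplus>\<^bsub>M\<^esub> i\<in>B. g j i)"
      using j fB Gc xB by (simp add: finsum_sgm Pi_def g_def)
    finally show "sgm M (sg j T) (x j \<odot>\<^bsub>M\<^esub> kd M s x c (insert j T)) = (\<Oplus>\<^bsub>M\<^esub> i\<in>B. g j i)" .
  qed
  also have "\<dots> = \<zero>\<^bsub>M\<^esub>"
  proof (rule finsum_antisym[OF fB gc])
    show "\<And>i. i \<in> B \<Longrightarrow> g i i = \<zero>\<^bsub>M\<^esub>" by (simp add: g_def G_def xB)
    fix i j assume i: "i \<in> B" and j: "j \<in> B"
    show "g i j = \<ominus>\<^bsub>M\<^esub> g j i"
    proof (cases "i = j")
      case True then show ?thesis using i by (simp add: g_def G_def xB M.add.inv_one)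
    next
      case ne: False
      define U where "U = insert i (insert j T)"
      have U2: "insert j (insert i T) = U" by (auto simp: U_def)
      have m: "x i \<odot>\<^bsub>M\<^esub> (x j \<odot>\<^bsub>M\<^esub> c U) = x j \<odot>\<^bsub>M\<^esub> (x i \<odot>\<^bsub>M\<^esub> c U)"
        using i j by (simp add: smult_comm xB c)
      have gij: "g i j = sgm M (sg i T = sg j (insert i T)) (x i \<odot>\<^bsub>M\<^esub> (x j \<odot>\<^bsub>M\<^esub> c U))"
        using ne i j by (simp add: g_def G_def smult_sgm sgm_sgm xB c U2)
      have gji: "g j i = sgm M (sg j T = sg i (insert j T)) (x j \<odot>\<^bsub>M\<^esub> (x i \<odot>\<^bsub>M\<^esub> c U))"
        using ne i j by (simp add: g_def G_def smult_sgm sgm_sgm xB c U_def)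
      have sp: "(sg j T = sg i (insert j T)) = (\<not> (sg i T = sg j (insert i T)))"
        using sg_pair[OF fT _ _ ne] i j by (auto simp: B_def)
      define \<beta> where "\<beta> = (sg i T = sg j (insert i T))"
      define m0 where "m0 = x j \<odot>\<^bsub>M\<^esub> (x i \<odot>\<^bsub>M\<^esub> c U)"
      have m0c: "m0 \<in> carrier M" using i j by (simp add: m0_def xB c)
      have e1: "g i j = sgm M \<beta> m0" using gij m by (simp only: \<beta>_def m0_def)
      have e2: "g j i = sgm M (\<not> \<beta>) m0" using gji sp by (simp only: \<beta>_def m0_def)
      show ?thesis unfolding e1 e2 sgm_not[OF m0c] using m0c by (simp add: M.minus_minus)
    qed
  qed
  finally show ?thesis .
qed

lemma kd_supp:
  assumes c: "c \<in> cvec M s q" and nz: "kd M s x c T \<noteq> \<zero>\<^bsub>M\<^esub>"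
  shows "T \<subseteq> {..<s} \<and> Suc (card T) = q"
proof (rule ccontr)
  assume a: "\<not> (T \<subseteq> {..<s} \<and> Suc (card T) = q)"
  show False
  proof (cases "T \<subseteq> {..<s}")
    case False then show False using nz by (simp add: kd_def)
  next
    case True
    have fT: "finite T" using True finite_subset by blast
    have "kd M s x c T = (\<Oplus>\<^bsub>M\<^esub> j\<in>{..<s} - T. sgm M (sg j T) (x j \<odot>\<^bsub>M\<^esub> c (insert j T)))"
      unfolding kd_def using True by simp
    also have "\<dots> = (\<Oplus>\<^bsub>M\<^esub> j\<in>{..<s} - T. \<zero>\<^bsub>M\<^esub>)"
    proof (intro M.finsum_cong'[OF refl])
      fix j assume j: "j \<in> {..<s} - T"
      then have "card (insert j T) \<noteq> q" using a True fT by auto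
      then have "c (insert j T) = \<zero>\<^bsub>M\<^esub>" using c by (auto simp: cvec_def)
      then show "sgm M (sg j T) (x j \<odot>\<^bsub>M\<^esub> c (insert j T)) = \<zero>\<^bsub>M\<^esub>" using j by (simp add: x_closed)
    qed auto
    finally show False using nz by simp
  qed
qed

lemma kd_cvec:
  assumes c: "c \<in> cvec M s (Suc q)"
  shows "kd M s x c \<in> cvec M s q"
proof -
  have cc: "\<And>S. c S \<in> carrier M" using c unfolding cvec_def by blast
  have "\<And>S. kd M s x c S \<in> carrier M" by (rule kd_closed[OF cc])
  moreover have "\<And>S. kd M s x c S \<noteq> \<zero>\<^bsub>M\<^esub> \<Longrightarrow> S \<subseteq> {..<s} \<and> card S = q"
    using kd_supp[OF c] by (metis Suc_inject)
  ultimately show ?thesis unfolding cvec_def by blast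
qed

lemma kd_cvec0:
  assumes c: "c \<in> cvec M s 0"
  shows "kd M s x c T = \<zero>\<^bsub>M\<^esub>"
proof (rule ccontr)
  assume "kd M s x c T \<noteq> \<zero>\<^bsub>M\<^esub>"
  then have "Suc (card T) = 0" using kd_supp[OF c] by blast
  then show False by simp
qed

lemma hj_cvec:
  assumes c: "c \<in> cvec M s q" and j: "j < s"
  shows "hj M j c \<in> cvec M s (Suc q)"
proof -
  have "hj M j c T \<in> carrier M" for T using c by (auto simp: hj_def cvec_def)
  moreover have "T \<subseteq> {..<s} \<and> card T = Suc q" if nz: "hj M j c T \<noteq> \<zero>\<^bsub>M\<^esub>" for T
  proof -
    have jT: "j \<in> T"
    proof (rule ccontr)
      assume "j \<notin> T" then have "hj M j c T = \<zero>\<^bsub>M\<^esub>" by (simp add: hj_def)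
      then show False using nz by simp
    qed
    have "c (T - {j}) \<noteq> \<zero>\<^bsub>M\<^esub>" using nz jT by (auto simp: hj_def)
    then have h: "T - {j} \<subseteq> {..<s}" "card (T - {j}) = q" using c by (auto simp: cvec_def)
    have "T \<subseteq> {..<s}" using h jT j by auto
    moreover then have "finite T" using finite_subset by blast
    ultimately show ?thesis using h jT by (simp add: card_Diff_singleton) (metis Suc_pred card_gt_0_iff empty_iff)
  qed
  ultimately show ?thesis by (auto simp: cvec_def)
qed

end

lemma sgm_True[simp]: "sgm M True m = m" by (simp add: sgm_def)

context kos begin

lemma kd_hj:
  assumes c: "c \<in> cvec M s q" and j: "j < s" and cyc: "\<And>T. kd M s x c T = \<zero>\<^bsub>M\<^esub>"
  shows "kd M s x (hj M j c) T = x j \<odot>\<^bsub>M\<^esub> c T"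
proof -
  have cc: "\<And>S. c S \<in> carrier M" using c unfolding cvec_def by blast
  have xj: "x j \<in> carrier R" using j x_closed by blast
  have hc: "\<And>S. hj M j c S \<in> carrier M" by (simp add: hj_def cc)
  show ?thesis
  proof (cases "T \<subseteq> {..<s}")
    case False
    then have "c T = \<zero>\<^bsub>M\<^esub>" using c unfolding cvec_def by blast
    then show ?thesis using False xj by (simp add: kd_def)
  next
    case TA: True
    have fT: "finite T" using TA finite_subset by blast
    define B where "B = {..<s} - T"
    have fB: "finite B" by (simp add: B_def)
    have xB: "\<And>i. i \<in> B \<Longrightarrow> x i \<in> carrier R" by (auto simp: B_def x_closed)
    have L: "kd M s x (hj M j c) T = (\<Oplus>\<^bsub>M\<^esub> i\<in>B. sgm M (sg i T) (x i \<odot>\<^bsub>M\<^esub> hj M j c (insert i T)))"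
      using TA by (simp add: kd_def B_def)
    show ?thesis
    proof (cases "j \<in> T")
      case False
      have jB: "j \<in> B" using False j by (simp add: B_def)
      have "kd M s x (hj M j c) T = sgm M (sg j T) (x j \<odot>\<^bsub>M\<^esub> hj M j c (insert j T))"
        unfolding L
      proof (rule finsum_single[OF fB jB])
        show "(\<lambda>i. sgm M (sg i T) (x i \<odot>\<^bsub>M\<^esub> hj M j c (insert i T))) \<in> B \<rightarrow> carrier M"
          using xB hc by simp
        fix i assume i: "i \<in> B" "i \<noteq> j"
        then have "hj M j c (insert i T) = \<zero>\<^bsub>M\<^esub>" using False by (simp add: hj_def)
        then show "sgm M (sg i T) (x i \<odot>\<^bsub>M\<^esub> hj M j c (insert i T)) = \<zero>\<^bsub>M\<^esub>" using xB i by simp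
      qed
      also have "hj M j c (insert j T) = sgm M (sg j T) (c T)"
        using False by (simp add: hj_def)
      also have "sgm M (sg j T) (x j \<odot>\<^bsub>M\<^esub> sgm M (sg j T) (c T)) = x j \<odot>\<^bsub>M\<^esub> c T"
        using xj cc by (simp add: smult_sgm sgm_sgm)
      finally show ?thesis .
    next
      case jT: True
      define T0 where "T0 = T - {j}"
      have T: "T = insert j T0" "j \<notin> T0" using jT by (auto simp: T0_def)
      have fT0: "finite T0" using fT by (simp add: T0_def)
      have T0A: "T0 \<subseteq> {..<s}" using TA by (auto simp: T0_def)
      define y where "y i = x i \<odot>\<^bsub>M\<^esub> c (insert i T0)" for i
      have yc: "\<And>i. i \<in> B \<Longrightarrow> y i \<in> carrier M" by (simp add: y_def xB cc)
      have "kd M s x (hj M j c) T = (\<Oplus>\<^bsub>M\<^esub> i\<in>B. \<ominus>\<^bsub>M\<^esub> sgm M (sg j T0) (sgm M (sg i T0) (y i)))"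
        unfolding L
      proof (rule M.finsum_cong'[OF refl])
        show "(\<lambda>i. \<ominus>\<^bsub>M\<^esub> sgm M (sg j T0) (sgm M (sg i T0) (y i))) \<in> B \<rightarrow> carrier M"
          using yc by simp
        fix i assume i: "i \<in> B"
        have ij: "i \<noteq> j" "i \<notin> T0" using i jT by (auto simp: B_def T0_def)
        have "insert i T - {j} = insert i T0" using ij by (auto simp: T0_def)
        then have h: "hj M j c (insert i T) = sgm M (sg j (insert i T0)) (c (insert i T0))"
          using jT by (simp add: hj_def)
        have sp: "(sg i T = sg j (insert i T0)) = (\<not> (sg j T0 = sg i T0))"
          unfolding T(1) using ij T(2) fT0 by (auto simp: sg_insert)
        have "sgm M (sg i T) (x i \<odot>\<^bsub>M\<^esub> hj M j c (insert i T)) = sgm M (sg i T = sg j (insert i T0)) (y i)"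
          unfolding h y_def using i xB cc by (simp add: smult_sgm sgm_sgm)
        also have "\<dots> = sgm M (\<not> (sg j T0 = sg i T0)) (y i)" by (simp only: sp)
        also have "\<dots> = \<ominus>\<^bsub>M\<^esub> sgm M (sg j T0) (sgm M (sg i T0) (y i))"
          by (simp only: sgm_not[OF yc[OF i]] sgm_sgm[OF yc[OF i]])
        finally show "sgm M (sg i T) (x i \<odot>\<^bsub>M\<^esub> hj M j c (insert i T)) = \<ominus>\<^bsub>M\<^esub> sgm M (sg j T0) (sgm M (sg i T0) (y i))" .
      qed
      also have "\<dots> = \<ominus>\<^bsub>M\<^esub> sgm M (sg j T0) (\<Oplus>\<^bsub>M\<^esub> i\<in>B. sgm M (sg i T0) (y i))"
        using fB yc by (simp add: finsum_neg finsum_sgm Pi_def M.finsum_closed)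
      also have "(\<Oplus>\<^bsub>M\<^esub> i\<in>B. sgm M (sg i T0) (y i)) = \<ominus>\<^bsub>M\<^esub> sgm M (sg j T0) (x j \<odot>\<^bsub>M\<^esub> c T)"
      proof (rule sum_zero_neg)
        show "sgm M (sg j T0) (x j \<odot>\<^bsub>M\<^esub> c T) \<in> carrier M" using xj cc by simp
        show "(\<Oplus>\<^bsub>M\<^esub> i\<in>B. sgm M (sg i T0) (y i)) \<in> carrier M" using yc by (simp add: M.finsum_closed Pi_def)
        have AB: "{..<s} - T0 = insert j B" using jT j by (auto simp: B_def T0_def)
        have "\<zero>\<^bsub>M\<^esub> = kd M s x c T0" using cyc by simp
        also have "\<dots> = (\<Oplus>\<^bsub>M\<^esub> i\<in>insert j B. sgm M (sg i T0) (x i \<odot>\<^bsub>M\<^esub> c (insert i T0)))"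
          using T0A AB by (simp add: kd_def)
        also have "\<dots> = sgm M (sg j T0) (x j \<odot>\<^bsub>M\<^esub> c (insert j T0)) \<oplus>\<^bsub>M\<^esub> (\<Oplus>\<^bsub>M\<^esub> i\<in>B. sgm M (sg i T0) (y i))"
          by (subst M.finsum_insert) (use fB jT xj xB cc in \<open>auto simp: B_def y_def\<close>)
        finally show "sgm M (sg j T0) (x j \<odot>\<^bsub>M\<^esub> c T) \<oplus>\<^bsub>M\<^esub> (\<Oplus>\<^bsub>M\<^esub> i\<in>B. sgm M (sg i T0) (y i)) = \<zero>\<^bsub>M\<^esub>"
          using T(1) by simp
      qed
      also have "\<ominus>\<^bsub>M\<^esub> sgm M (sg j T0) (\<ominus>\<^bsub>M\<^esub> sgm M (sg j T0) (x j \<odot>\<^bsub>M\<^esub> c T)) = x j \<odot>\<^bsub>M\<^esub> c T"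
        using xj cc by (simp add: sgm_neg sgm_sgm M.minus_minus)
      finally show ?thesis .
    qed
  qed
qed

end

definition tvec :: "('a,'b,'d) module_scheme \<Rightarrow> nat \<Rightarrow> (nat \<Rightarrow> nat) \<Rightarrow> nat \<Rightarrow> (nat set \<Rightarrow> nat \<Rightarrow> nat \<Rightarrow> 'b) set" where
  "tvec M s n N = {w. (\<forall>S p k. w S p k \<in> carrier M) \<and>
     (\<forall>S p k. w S p k \<noteq> \<zero>\<^bsub>M\<^esub> \<longrightarrow> S \<subseteq> {..<s} \<and> card S + p = N \<and> k < n p)}"

definition Dt :: "('a,'b,'d) module_scheme \<Rightarrow> nat \<Rightarrow> (nat \<Rightarrow> 'a) \<Rightarrow> (nat \<Rightarrow> nat) \<Rightarrow> (nat \<Rightarrow> nat \<Rightarrow> nat \<Rightarrow> 'a)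
   \<Rightarrow> (nat set \<Rightarrow> nat \<Rightarrow> nat \<Rightarrow> 'b) \<Rightarrow> nat set \<Rightarrow> nat \<Rightarrow> nat \<Rightarrow> 'b" where
  "Dt M s x n d w = (\<lambda>S p k. if S \<subseteq> {..<s} \<and> k < n p then
      (\<Oplus>\<^bsub>M\<^esub> k'\<in>{..<n (Suc p)}. d (Suc p) k k' \<odot>\<^bsub>M\<^esub> w S (Suc p) k')
      \<oplus>\<^bsub>M\<^esub> sgm M (even p) (kd M s x (\<lambda>S'. w S' p k) S) else \<zero>\<^bsub>M\<^esub>)"

context kos begin
lemma kd_zero_at:
  assumes "\<And>j. j < s \<Longrightarrow> j \<notin> S \<Longrightarrow> c (insert j S) = \<zero>\<^bsub>M\<^esub>"
  shows "kd M s x c S = \<zero>\<^bsub>M\<^esub>"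
proof -
  have "(\<Oplus>\<^bsub>M\<^esub> j\<in>{..<s} - S. sgm M (sg j S) (x j \<odot>\<^bsub>M\<^esub> c (insert j S))) = (\<Oplus>\<^bsub>M\<^esub> j\<in>{..<s} - S. \<zero>\<^bsub>M\<^esub>)"
    by (intro M.finsum_cong'[OF refl]) (auto simp: assms x_closed)
  then show ?thesis by (simp add: kd_def)
qed
end

locale res = kos R M s x for R :: "('a,'c) ring_scheme" and M :: "('a,'b,'d) module_scheme" and s x +
  fixes n :: "nat \<Rightarrow> nat" and d :: "nat \<Rightarrow> nat \<Rightarrow> nat \<Rightarrow> 'a"
  assumes n0: "n 0 = 1" and s_eq: "s = n 1" and x_eq: "\<And>j. x j = d 1 0 j"
    and d_closed: "\<And>i j k. 1 \<le> i \<Longrightarrow> j < n (i - 1) \<Longrightarrow> k < n i \<Longrightarrow> d i j k \<in> carrier R"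
    and dd0: "\<And>p j k. j < n p \<Longrightarrow> k < n (Suc (Suc p)) \<Longrightarrow>
        (\<Oplus>\<^bsub>R\<^esub> k'\<in>{..<n (Suc p)}. d (Suc p) j k' \<otimes>\<^bsub>R\<^esub> d (Suc (Suc p)) k' k) = \<zero>\<^bsub>R\<^esub>"
    and tor: "\<And>p v. v \<in> vecs M (n p) \<Longrightarrow> (1 \<le> p \<longrightarrow> mat_act M (smult M) (d p) (n (p - 1)) (n p) v = (\<lambda>_. \<zero>\<^bsub>M\<^esub>)) \<Longrightarrow>
        \<exists>u\<in>vecs M (n (Suc p)). mat_act M (smult M) (d (Suc p)) (n p) (n (Suc p)) u = v"
begin

lemma dc: "j < n p \<Longrightarrow> k < n (Suc p) \<Longrightarrow> d (Suc p) j k \<in> carrier R"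
  using d_closed[of "Suc p" j k] by simp

abbreviation "D \<equiv> Dt M s x n d"

lemma Dt_closed:
  assumes wc: "\<And>S p k. w S p k \<in> carrier M"
  shows "D w S p k \<in> carrier M"
proof (cases "S \<subseteq> {..<s} \<and> k < n p")
  case True
  have "(\<Oplus>\<^bsub>M\<^esub> k'\<in>{..<n (Suc p)}. d (Suc p) k k' \<odot>\<^bsub>M\<^esub> w S (Suc p) k') \<in> carrier M"
    by (rule M.finsum_closed) (use True in \<open>auto simp: dc wc\<close>)
  moreover have "sgm M (even p) (kd M s x (\<lambda>S'. w S' p k) S) \<in> carrier M"
    by (intro sgm_closed kd_closed wc)
  ultimately show ?thesis using True by (simp add: Dt_def)
qed (auto simp: Dt_def)

lemma Dt_supp:
  assumes w: "w \<in> tvec M s n N'" and nz: "D w S p k \<noteq> \<zero>\<^bsub>M\<^esub>"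
  shows "S \<subseteq> {..<s} \<and> Suc (card S + p) = N' \<and> k < n p"
proof -
  have wc: "\<And>S p k. w S p k \<in> carrier M" and ws: "\<And>S p k. w S p k \<noteq> \<zero>\<^bsub>M\<^esub> \<Longrightarrow> S \<subseteq> {..<s} \<and> card S + p = N' \<and> k < n p"
    using w unfolding tvec_def by blast+
  have Sk: "S \<subseteq> {..<s}" "k < n p" using nz by (auto simp: Dt_def split: if_splits)
  have fS: "finite S" using Sk finite_subset by blast
  show ?thesis
  proof (rule ccontr)
    assume ne: "\<not> ?thesis"
    then have ne': "Suc (card S + p) \<noteq> N'" using Sk by blast
    have "(\<Oplus>\<^bsub>M\<^esub> k'\<in>{..<n (Suc p)}. d (Suc p) k k' \<odot>\<^bsub>M\<^esub> w S (Suc p) k') = (\<Oplus>\<^bsub>M\<^esub> k'\<in>{..<n (Suc p)}. \<zero>\<^bsub>M\<^esub>)"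
    proof (intro M.finsum_cong'[OF refl])
      fix k' assume k': "k' \<in> {..<n (Suc p)}"
      have "w S (Suc p) k' = \<zero>\<^bsub>M\<^esub>" using ws[of S "Suc p" k'] ne' by auto
      then show "d (Suc p) k k' \<odot>\<^bsub>M\<^esub> w S (Suc p) k' = \<zero>\<^bsub>M\<^esub>" using k' Sk by (simp add: dc)
    qed auto
    moreover have "kd M s x (\<lambda>S'. w S' p k) S = \<zero>\<^bsub>M\<^esub>"
    proof (rule kd_zero_at)
      fix j assume "j < s" "j \<notin> S"
      then have "card (insert j S) + p \<noteq> N'" using ne' fS by simp
      then show "w (insert j S) p k = \<zero>\<^bsub>M\<^esub>" using ws by blast
    qed
    ultimately have "D w S p k = \<zero>\<^bsub>M\<^esub>" using Sk by (simp add: Dt_def)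
    then show False using nz by simp
  qed
qed

lemma Dt_tvec: "w \<in> tvec M s n (Suc N) \<Longrightarrow> D w \<in> tvec M s n N"
proof -
  assume w: "w \<in> tvec M s n (Suc N)"
  have wc: "\<And>S p k. w S p k \<in> carrier M" using w unfolding tvec_def by blast
  show ?thesis unfolding tvec_def using Dt_closed[OF wc] Dt_supp[OF w] by auto
qed

lemma Dt_tvec0: "w \<in> tvec M s n 0 \<Longrightarrow> D w S p k = \<zero>\<^bsub>M\<^esub>"
  using Dt_supp[of w 0 S p k] by auto

end

context res begin

lemma Dt_eq: "S \<subseteq> {..<s} \<and> k < n p \<Longrightarrow> D w S p k =
      (\<Oplus>\<^bsub>M\<^esub> k'\<in>{..<n (Suc p)}. d (Suc p) k k' \<odot>\<^bsub>M\<^esub> w S (Suc p) k')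
      \<oplus>\<^bsub>M\<^esub> sgm M (even p) (kd M s x (\<lambda>S'. w S' p k) S)"
  by (simp add: Dt_def)

lemma Dt_add:
  assumes wc: "\<And>S p k. w S p k \<in> carrier M" and uc: "\<And>S p k. u S p k \<in> carrier M"
  shows "D (\<lambda>S p k. w S p k \<oplus>\<^bsub>M\<^esub> u S p k) S p k = D w S p k \<oplus>\<^bsub>M\<^esub> D u S p k"
proof (cases "S \<subseteq> {..<s} \<and> k < n p")
  case True
  define a where "a = (\<Oplus>\<^bsub>M\<^esub> k'\<in>{..<n (Suc p)}. d (Suc p) k k' \<odot>\<^bsub>M\<^esub> w S (Suc p) k')"
  define b where "b = (\<Oplus>\<^bsub>M\<^esub> k'\<in>{..<n (Suc p)}. d (Suc p) k k' \<odot>\<^bsub>M\<^esub> u S (Suc p) k')"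
  define a' where "a' = sgm M (even p) (kd M s x (\<lambda>S'. w S' p k) S)"
  define b' where "b' = sgm M (even p) (kd M s x (\<lambda>S'. u S' p k) S)"
  have cl: "a \<in> carrier M" "b \<in> carrier M" "a' \<in> carrier M" "b' \<in> carrier M"
    unfolding a_def b_def a'_def b'_def using True
    by (auto intro!: M.finsum_closed sgm_closed kd_closed simp: wc uc dc)
  have "(\<Oplus>\<^bsub>M\<^esub> k'\<in>{..<n (Suc p)}. d (Suc p) k k' \<odot>\<^bsub>M\<^esub> (w S (Suc p) k' \<oplus>\<^bsub>M\<^esub> u S (Suc p) k'))
     = (\<Oplus>\<^bsub>M\<^esub> k'\<in>{..<n (Suc p)}. d (Suc p) k k' \<odot>\<^bsub>M\<^esub> w S (Suc p) k' \<oplus>\<^bsub>M\<^esub> d (Suc p) k k' \<odot>\<^bsub>M\<^esub> u S (Suc p) k')"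
    by (intro M.finsum_cong'[OF refl]) (use True in \<open>auto simp: smult_r_distr wc uc dc\<close>)
  also have "\<dots> = a \<oplus>\<^bsub>M\<^esub> b" unfolding a_def b_def
    by (rule M.finsum_addf) (use True in \<open>auto simp: wc uc dc\<close>)
  finally have e1: "(\<Oplus>\<^bsub>M\<^esub> k'\<in>{..<n (Suc p)}. d (Suc p) k k' \<odot>\<^bsub>M\<^esub> (w S (Suc p) k' \<oplus>\<^bsub>M\<^esub> u S (Suc p) k')) = a \<oplus>\<^bsub>M\<^esub> b" .
  have e2: "sgm M (even p) (kd M s x (\<lambda>S'. w S' p k \<oplus>\<^bsub>M\<^esub> u S' p k) S) = a' \<oplus>\<^bsub>M\<^esub> b'"
    unfolding a'_def b'_def by (simp add: kd_add wc uc sgm_add kd_closed)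
  have "D (\<lambda>S p k. w S p k \<oplus>\<^bsub>M\<^esub> u S p k) S p k = (a \<oplus>\<^bsub>M\<^esub> b) \<oplus>\<^bsub>M\<^esub> (a' \<oplus>\<^bsub>M\<^esub> b')"
    using True e1 e2 by (simp add: Dt_def)
  also have "\<dots> = (a \<oplus>\<^bsub>M\<^esub> a') \<oplus>\<^bsub>M\<^esub> (b \<oplus>\<^bsub>M\<^esub> b')" using cl by (simp add: M.a_ac)
  also have "\<dots> = D w S p k \<oplus>\<^bsub>M\<^esub> D u S p k"
    using True by (simp add: Dt_def a_def b_def a'_def b'_def)
  finally show ?thesis .
qed (auto simp: Dt_def)

lemma Dt_zero: "D (\<lambda>S p k. \<zero>\<^bsub>M\<^esub>) S p k = \<zero>\<^bsub>M\<^esub>"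
proof (cases "S \<subseteq> {..<s} \<and> k < n p")
  case True
  have "(\<Oplus>\<^bsub>M\<^esub> k'\<in>{..<n (Suc p)}. d (Suc p) k k' \<odot>\<^bsub>M\<^esub> \<zero>\<^bsub>M\<^esub>) = (\<Oplus>\<^bsub>M\<^esub> k'\<in>{..<n (Suc p)}. \<zero>\<^bsub>M\<^esub>)"
    by (intro M.finsum_cong'[OF refl]) (use True in \<open>auto simp: dc\<close>)
  then show ?thesis using True by (simp add: Dt_def kd_zero)
qed (auto simp: Dt_def)

lemma Dt_neg:
  assumes wc: "\<And>S p k. w S p k \<in> carrier M"
  shows "D (\<lambda>S p k. \<ominus>\<^bsub>M\<^esub> w S p k) S p k = \<ominus>\<^bsub>M\<^esub> D w S p k"
proof -
  have nc: "\<And>S p k. \<ominus>\<^bsub>M\<^esub> w S p k \<in> carrier M" using wc by simp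
  have "D (\<lambda>S p k. \<ominus>\<^bsub>M\<^esub> w S p k \<oplus>\<^bsub>M\<^esub> w S p k) S p k = D (\<lambda>S p k. \<zero>\<^bsub>M\<^esub>) S p k"
    using wc by (simp add: M.l_neg)
  then have "D (\<lambda>S p k. \<ominus>\<^bsub>M\<^esub> w S p k) S p k \<oplus>\<^bsub>M\<^esub> D w S p k = \<zero>\<^bsub>M\<^esub>"
    by (simp add: Dt_add[OF nc wc] Dt_zero)
  from M.minus_equality[OF this Dt_closed[OF wc] Dt_closed[OF nc]] show ?thesis by simp
qed

lemma Dt_Dt:
  assumes wc: "\<And>S p k. w S p k \<in> carrier M"
  shows "D (D w) S p k = \<zero>\<^bsub>M\<^esub>"
proof (cases "S \<subseteq> {..<s} \<and> k < n p")
  case False then show ?thesis by (auto simp: Dt_def)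
next
  case True
  have Dc: "\<And>S p k. D w S p k \<in> carrier M" by (rule Dt_closed[OF wc])
  define W where "W k' = (\<lambda>S'. w S' (Suc p) k')" for k'
  have Wc: "\<And>k' S. W k' S \<in> carrier M" by (simp add: W_def wc)
  define G where "G S' = (\<Oplus>\<^bsub>M\<^esub> k'\<in>{..<n (Suc p)}. d (Suc p) k k' \<odot>\<^bsub>M\<^esub> W k' S')" for S'
  have Gc: "\<And>S'. G S' \<in> carrier M" unfolding G_def
    by (rule M.finsum_closed) (use True in \<open>auto simp: Wc dc\<close>)
  define F2 where "F2 k' = (\<Oplus>\<^bsub>M\<^esub> k''\<in>{..<n (Suc (Suc p))}. d (Suc (Suc p)) k' k'' \<odot>\<^bsub>M\<^esub> w S (Suc (Suc p)) k'')" for k'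
  have F2c: "\<And>k'. k' < n (Suc p) \<Longrightarrow> F2 k' \<in> carrier M" unfolding F2_def
    by (rule M.finsum_closed) (auto simp: wc dc)
  define K where "K = kd M s x G S"
  have Kc: "K \<in> carrier M" unfolding K_def by (rule kd_closed[OF Gc])
  have kWc: "\<And>k'. kd M s x (W k') S \<in> carrier M" by (rule kd_closed[OF Wc])
  have dk: "\<And>k'. k' < n (Suc p) \<Longrightarrow> d (Suc p) k k' \<in> carrier R" using True by (simp add: dc)
  have "(\<Oplus>\<^bsub>M\<^esub> k'\<in>{..<n (Suc p)}. d (Suc p) k k' \<odot>\<^bsub>M\<^esub> D w S (Suc p) k')
      = (\<Oplus>\<^bsub>M\<^esub> k'\<in>{..<n (Suc p)}. d (Suc p) k k' \<odot>\<^bsub>M\<^esub> F2 k' \<oplus>\<^bsub>M\<^esub> d (Suc p) k k' \<odot>\<^bsub>M\<^esub> sgm M (\<not> even p) (kd M s x (W k') S))"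
  proof (rule M.finsum_cong'[OF refl])
    show "(\<lambda>k'. d (Suc p) k k' \<odot>\<^bsub>M\<^esub> F2 k' \<oplus>\<^bsub>M\<^esub> d (Suc p) k k' \<odot>\<^bsub>M\<^esub> sgm M (\<not> even p) (kd M s x (W k') S)) \<in> {..<n (Suc p)} \<rightarrow> carrier M"
      using F2c dk kWc by simp
    fix k' assume k': "k' \<in> {..<n (Suc p)}"
    have "D w S (Suc p) k' = F2 k' \<oplus>\<^bsub>M\<^esub> sgm M (\<not> even p) (kd M s x (W k') S)"
      using True k' by (simp add: Dt_def F2_def W_def)
    then show "d (Suc p) k k' \<odot>\<^bsub>M\<^esub> D w S (Suc p) k' = d (Suc p) k k' \<odot>\<^bsub>M\<^esub> F2 k' \<oplus>\<^bsub>M\<^esub> d (Suc p) k k' \<odot>\<^bsub>M\<^esub> sgm M (\<not> even p) (kd M s x (W k') S)"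
      using k' F2c dk kWc by (simp add: smult_r_distr)
  qed
  also have "\<dots> = (\<Oplus>\<^bsub>M\<^esub> k'\<in>{..<n (Suc p)}. d (Suc p) k k' \<odot>\<^bsub>M\<^esub> F2 k') \<oplus>\<^bsub>M\<^esub>
       (\<Oplus>\<^bsub>M\<^esub> k'\<in>{..<n (Suc p)}. d (Suc p) k k' \<odot>\<^bsub>M\<^esub> sgm M (\<not> even p) (kd M s x (W k') S))"
    by (rule M.finsum_addf) (use F2c dk kWc in auto)
  also have "(\<Oplus>\<^bsub>M\<^esub> k'\<in>{..<n (Suc p)}. d (Suc p) k k' \<odot>\<^bsub>M\<^esub> F2 k') = \<zero>\<^bsub>M\<^esub>"
  proof -
    have "(\<Oplus>\<^bsub>M\<^esub> k'\<in>{..<n (Suc p)}. d (Suc p) k k' \<odot>\<^bsub>M\<^esub> F2 k')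
       = (\<Oplus>\<^bsub>M\<^esub> k'\<in>{..<n (Suc p)}. \<Oplus>\<^bsub>M\<^esub> k''\<in>{..<n (Suc (Suc p))}. (d (Suc p) k k' \<otimes>\<^bsub>R\<^esub> d (Suc (Suc p)) k' k'') \<odot>\<^bsub>M\<^esub> w S (Suc (Suc p)) k'')"
    proof (rule M.finsum_cong'[OF refl])
      show "(\<lambda>k'. \<Oplus>\<^bsub>M\<^esub> k''\<in>{..<n (Suc (Suc p))}. (d (Suc p) k k' \<otimes>\<^bsub>R\<^esub> d (Suc (Suc p)) k' k'') \<odot>\<^bsub>M\<^esub> w S (Suc (Suc p)) k'') \<in> {..<n (Suc p)} \<rightarrow> carrier M"
        using dk by (auto intro!: M.finsum_closed simp: wc dc)
      fix k' assume k': "k' \<in> {..<n (Suc p)}"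
      show "d (Suc p) k k' \<odot>\<^bsub>M\<^esub> F2 k' = (\<Oplus>\<^bsub>M\<^esub> k''\<in>{..<n (Suc (Suc p))}. (d (Suc p) k k' \<otimes>\<^bsub>R\<^esub> d (Suc (Suc p)) k' k'') \<odot>\<^bsub>M\<^esub> w S (Suc (Suc p)) k'')"
        unfolding F2_def using k' dk
        by (subst finsum_smult_ldistr) (auto intro!: M.finsum_cong' simp: smult_assoc1 wc dc)
    qed
    also have "\<dots> = (\<Oplus>\<^bsub>M\<^esub> k''\<in>{..<n (Suc (Suc p))}. \<Oplus>\<^bsub>M\<^esub> k'\<in>{..<n (Suc p)}. (d (Suc p) k k' \<otimes>\<^bsub>R\<^esub> d (Suc (Suc p)) k' k'') \<odot>\<^bsub>M\<^esub> w S (Suc (Suc p)) k'')"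
      by (rule finsum_swap) (use dk in \<open>auto simp: wc dc\<close>)
    also have "\<dots> = (\<Oplus>\<^bsub>M\<^esub> k''\<in>{..<n (Suc (Suc p))}. \<zero>\<^bsub>M\<^esub>)"
    proof (rule M.finsum_cong'[OF refl])
      fix k'' assume k'': "k'' \<in> {..<n (Suc (Suc p))}"
      have "(\<Oplus>\<^bsub>M\<^esub> k'\<in>{..<n (Suc p)}. (d (Suc p) k k' \<otimes>\<^bsub>R\<^esub> d (Suc (Suc p)) k' k'') \<odot>\<^bsub>M\<^esub> w S (Suc (Suc p)) k'')
         = (\<Oplus>\<^bsub>R\<^esub> k'\<in>{..<n (Suc p)}. d (Suc p) k k' \<otimes>\<^bsub>R\<^esub> d (Suc (Suc p)) k' k'') \<odot>\<^bsub>M\<^esub> w S (Suc (Suc p)) k''"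
        by (rule finsum_smult_rdistr[symmetric]) (use dk k'' in \<open>auto simp: wc dc\<close>)
      also have "\<dots> = \<zero>\<^bsub>M\<^esub>" using dd0[of k p k''] True k'' by (simp add: wc)
      finally show "(\<Oplus>\<^bsub>M\<^esub> k'\<in>{..<n (Suc p)}. (d (Suc p) k k' \<otimes>\<^bsub>R\<^esub> d (Suc (Suc p)) k' k'') \<odot>\<^bsub>M\<^esub> w S (Suc (Suc p)) k'') = \<zero>\<^bsub>M\<^esub>" .
    qed auto
    finally show ?thesis by simp
  qed
  also have "(\<Oplus>\<^bsub>M\<^esub> k'\<in>{..<n (Suc p)}. d (Suc p) k k' \<odot>\<^bsub>M\<^esub> sgm M (\<not> even p) (kd M s x (W k') S))
      = sgm M (\<not> even p) K"
  proof -
    have "(\<Oplus>\<^bsub>M\<^esub> k'\<in>{..<n (Suc p)}. d (Suc p) k k' \<odot>\<^bsub>M\<^esub> sgm M (\<not> even p) (kd M s x (W k') S))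
        = (\<Oplus>\<^bsub>M\<^esub> k'\<in>{..<n (Suc p)}. sgm M (\<not> even p) (d (Suc p) k k' \<odot>\<^bsub>M\<^esub> kd M s x (W k') S))"
      by (intro M.finsum_cong'[OF refl]) (use dk kWc in \<open>auto simp: smult_sgm\<close>)
    also have "\<dots> = sgm M (\<not> even p) (\<Oplus>\<^bsub>M\<^esub> k'\<in>{..<n (Suc p)}. d (Suc p) k k' \<odot>\<^bsub>M\<^esub> kd M s x (W k') S)"
      by (rule finsum_sgm[symmetric]) (use dk kWc in auto)
    also have "(\<Oplus>\<^bsub>M\<^esub> k'\<in>{..<n (Suc p)}. d (Suc p) k k' \<odot>\<^bsub>M\<^esub> kd M s x (W k') S)
        = (\<Oplus>\<^bsub>M\<^esub> k'\<in>{..<n (Suc p)}. kd M s x (\<lambda>S'. d (Suc p) k k' \<odot>\<^bsub>M\<^esub> W k' S') S)"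
      by (intro M.finsum_cong'[OF refl]) (use dk Wc in \<open>auto simp: kd_smult kd_closed\<close>)
    also have "\<dots> = K" unfolding K_def G_def
      by (rule kd_finsum[symmetric]) (use dk Wc in auto)
    finally show ?thesis .
  qed
  finally have F: "(\<Oplus>\<^bsub>M\<^esub> k'\<in>{..<n (Suc p)}. d (Suc p) k k' \<odot>\<^bsub>M\<^esub> D w S (Suc p) k') = \<zero>\<^bsub>M\<^esub> \<oplus>\<^bsub>M\<^esub> sgm M (\<not> even p) K" .
  have kdK: "kd M s x (\<lambda>S'. D w S' p k) S = K"
  proof -
    have "kd M s x (\<lambda>S'. D w S' p k) S = kd M s x (\<lambda>S'. G S' \<oplus>\<^bsub>M\<^esub> sgm M (even p) (kd M s x (\<lambda>S''. w S'' p k) S')) S"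
      by (rule kd_cong) (use True Gc wc kd_closed in \<open>auto simp: Dt_def G_def W_def\<close>)
    also have "\<dots> = K \<oplus>\<^bsub>M\<^esub> kd M s x (\<lambda>S'. sgm M (even p) (kd M s x (\<lambda>S''. w S'' p k) S')) S"
      unfolding K_def by (rule kd_add) (use Gc wc kd_closed in auto)
    also have "kd M s x (\<lambda>S'. sgm M (even p) (kd M s x (\<lambda>S''. w S'' p k) S')) S = \<zero>\<^bsub>M\<^esub>"
      using wc by (simp add: kd_sgm kd_closed kd_kd)
    finally show ?thesis using Kc by simp
  qed
  have e: "D (D w) S p k = (\<zero>\<^bsub>M\<^esub> \<oplus>\<^bsub>M\<^esub> sgm M (\<not> even p) K) \<oplus>\<^bsub>M\<^esub> sgm M (even p) K"
    unfolding Dt_eq[OF True] F kdK ..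
  show ?thesis unfolding e using Kc sgm_cancel[OF Kc, of "even p"]
    by (simp add: M.a_comm)
qed

end

context res begin

lemma tvec_add:
  assumes w: "w \<in> tvec M s n N" and u: "u \<in> tvec M s n N"
  shows "(\<lambda>S p k. w S p k \<oplus>\<^bsub>M\<^esub> u S p k) \<in> tvec M s n N"
proof -
  have wc: "\<And>S p k. w S p k \<in> carrier M" and ws: "\<And>S p k. w S p k \<noteq> \<zero>\<^bsub>M\<^esub> \<Longrightarrow> S \<subseteq> {..<s} \<and> card S + p = N \<and> k < n p"
    using w unfolding tvec_def by blast+
  have uc: "\<And>S p k. u S p k \<in> carrier M" and us: "\<And>S p k. u S p k \<noteq> \<zero>\<^bsub>M\<^esub> \<Longrightarrow> S \<subseteq> {..<s} \<and> card S + p = N \<and> k < n p"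
    using u unfolding tvec_def by blast+
  have "S \<subseteq> {..<s} \<and> card S + p = N \<and> k < n p" if nz: "w S p k \<oplus>\<^bsub>M\<^esub> u S p k \<noteq> \<zero>\<^bsub>M\<^esub>" for S p k
  proof (cases "w S p k = \<zero>\<^bsub>M\<^esub>")
    case True
    then have "u S p k \<noteq> \<zero>\<^bsub>M\<^esub>" using nz uc by simp
    then show ?thesis by (rule us)
  next
    case False then show ?thesis by (rule ws)
  qed
  then show ?thesis unfolding tvec_def using wc uc by auto
qed

lemma tvec_neg:
  assumes w: "w \<in> tvec M s n N"
  shows "(\<lambda>S p k. \<ominus>\<^bsub>M\<^esub> w S p k) \<in> tvec M s n N"
proof -
  have wc: "\<And>S p k. w S p k \<in> carrier M" and ws: "\<And>S p k. w S p k \<noteq> \<zero>\<^bsub>M\<^esub> \<Longrightarrow> S \<subseteq> {..<s} \<and> card S + p = N \<and> k < n p"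
    using w unfolding tvec_def by blast+
  have "S \<subseteq> {..<s} \<and> card S + p = N \<and> k < n p" if nz: "\<ominus>\<^bsub>M\<^esub> w S p k \<noteq> \<zero>\<^bsub>M\<^esub>" for S p k
  proof (rule ws)
    show "w S p k \<noteq> \<zero>\<^bsub>M\<^esub>" using nz by auto
  qed
  then show ?thesis unfolding tvec_def using wc by auto
qed

lemma tvec_zero: "(\<lambda>S p k. \<zero>\<^bsub>M\<^esub>) \<in> tvec M s n N"
  unfolding tvec_def by auto

lemma tvec_carrier: "w \<in> tvec M s n N \<Longrightarrow> w S p k \<in> carrier M"
  unfolding tvec_def by blast

lemma tvec_supp: "w \<in> tvec M s n N \<Longrightarrow> w S p k \<noteq> \<zero>\<^bsub>M\<^esub> \<Longrightarrow> S \<subseteq> {..<s} \<and> card S + p = N \<and> k < n p"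
  unfolding tvec_def by blast

lemma Z1_step:
  assumes z: "z \<in> tvec M s n N" and cyc: "\<And>S p k. D z S p k = \<zero>\<^bsub>M\<^esub>"
    and lev: "\<And>S p k. z S p k \<noteq> \<zero>\<^bsub>M\<^esub> \<Longrightarrow> card S < Suc q" and qN: "q \<le> N"
  shows "\<exists>U \<in> tvec M s n (Suc N). (\<lambda>S p k. z S p k \<oplus>\<^bsub>M\<^esub> \<ominus>\<^bsub>M\<^esub> D U S p k) \<in> tvec M s n N \<and>
     (\<forall>S p k. D (\<lambda>S p k. z S p k \<oplus>\<^bsub>M\<^esub> \<ominus>\<^bsub>M\<^esub> D U S p k) S p k = \<zero>\<^bsub>M\<^esub>) \<and>
     (\<forall>S p k. z S p k \<oplus>\<^bsub>M\<^esub> \<ominus>\<^bsub>M\<^esub> D U S p k \<noteq> \<zero>\<^bsub>M\<^esub> \<longrightarrow> card S < q)"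
proof -
  define p0 where "p0 = N - q"
  have zc: "\<And>S p k. z S p k \<in> carrier M" using z by (rule tvec_carrier)
  have zs: "\<And>S p k. z S p k \<noteq> \<zero>\<^bsub>M\<^esub> \<Longrightarrow> S \<subseteq> {..<s} \<and> card S + p = N \<and> k < n p"
    using z by (rule tvec_supp)
  define v where "v S = (\<lambda>k. z S p0 k)" for S
  have vv: "v S \<in> vecs M (n p0)" for S
    unfolding vecs_def v_def using zc zs by (auto, meson not_le)
  have vk: "1 \<le> p0 \<longrightarrow> mat_act M (smult M) (d p0) (n (p0 - 1)) (n p0) (v S) = (\<lambda>_. \<zero>\<^bsub>M\<^esub>)"
    if S: "S \<subseteq> {..<s}" "card S = q" for S
  proof
    assume p1: "1 \<le> p0"
    then obtain p' where p': "p0 = Suc p'" by (cases p0) auto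
    show "mat_act M (smult M) (d p0) (n (p0 - 1)) (n p0) (v S) = (\<lambda>_. \<zero>\<^bsub>M\<^esub>)"
    proof
      fix j
      show "mat_act M (smult M) (d p0) (n (p0 - 1)) (n p0) (v S) j = \<zero>\<^bsub>M\<^esub>"
      proof (cases "j < n p'")
        case True
        have fS: "finite S" using S finite_subset by blast
        have kz: "kd M s x (\<lambda>S'. z S' p' j) S = \<zero>\<^bsub>M\<^esub>"
        proof (rule kd_zero_at)
          fix i assume "i < s" "i \<notin> S"
          then have "\<not> card (insert i S) < Suc q" using S fS by simp
          then show "z (insert i S) p' j = \<zero>\<^bsub>M\<^esub>" using lev by blast
        qed
        have "\<zero>\<^bsub>M\<^esub> = D z S p' j" using cyc by simp
        also have "\<dots> = (\<Oplus>\<^bsub>M\<^esub> k'\<in>{..<n (Suc p')}. d (Suc p') j k' \<odot>\<^bsub>M\<^esub> z S (Suc p') k')"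
          using True S kz by (simp add: Dt_eq M.finsum_closed Pi_def zc dc)
        finally show ?thesis using True p' by (simp add: mat_act_def v_def)
      qed (simp add: mat_act_def p')
    qed
  qed
  have "\<forall>S. \<exists>u. S \<subseteq> {..<s} \<and> card S = q \<longrightarrow> u \<in> vecs M (n (Suc p0)) \<and>
      mat_act M (smult M) (d (Suc p0)) (n p0) (n (Suc p0)) u = v S"
    using tor[OF vv] vk by blast
  then obtain uf where uf: "\<And>S. S \<subseteq> {..<s} \<Longrightarrow> card S = q \<Longrightarrow> uf S \<in> vecs M (n (Suc p0)) \<and>
      mat_act M (smult M) (d (Suc p0)) (n p0) (n (Suc p0)) (uf S) = v S"
    by metis
  define U where "U S p k = (if S \<subseteq> {..<s} \<and> card S = q \<and> p = Suc p0 then uf S k else \<zero>\<^bsub>M\<^esub>)" for S p k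
  have Uc: "\<And>S p k. U S p k \<in> carrier M"
    unfolding U_def using uf unfolding vecs_def by (auto, metis M.zero_closed not_le)
  have U: "U \<in> tvec M s n (Suc N)"
    unfolding tvec_def using Uc uf qN
    by (auto simp: U_def p0_def vecs_def split: if_splits, metis not_le)
  have DU: "D U S p k = (if card S = q \<and> p = p0 then z S p k else \<zero>\<^bsub>M\<^esub>)" if qS: "q \<le> card S" for S p k
  proof (cases "S \<subseteq> {..<s} \<and> k < n p")
    case False
    then have "z S p k = \<zero>\<^bsub>M\<^esub>" using zs by blast
    then show ?thesis using False by (auto simp: Dt_def)
  next
    case True
    have fS: "finite S" using True finite_subset by blast
    have kz: "kd M s x (\<lambda>S'. U S' p k) S = \<zero>\<^bsub>M\<^esub>"
    proof (rule kd_zero_at)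
      fix i assume "i < s" "i \<notin> S"
      then have "card (insert i S) \<noteq> q" using fS qS by simp
      then show "U (insert i S) p k = \<zero>\<^bsub>M\<^esub>" unfolding U_def by auto
    qed
    show ?thesis
    proof (cases "card S = q \<and> p = p0")
      case c: True
      have "uf S \<in> vecs M (n (Suc p0))" using uf True c by blast
      then have ufc: "\<And>k'. k' < n (Suc p0) \<Longrightarrow> uf S k' \<in> carrier M" unfolding vecs_def by blast
      have fc: "(\<Oplus>\<^bsub>M\<^esub> k'\<in>{..<n (Suc p0)}. d (Suc p0) k k' \<odot>\<^bsub>M\<^esub> uf S k') \<in> carrier M"
        by (intro M.finsum_closed) (use True c ufc in \<open>auto simp: dc\<close>)
      have "D U S p k = (\<Oplus>\<^bsub>M\<^esub> k'\<in>{..<n (Suc p0)}. d (Suc p0) k k' \<odot>\<^bsub>M\<^esub> uf S k')"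
        using True c kz fc by (simp add: Dt_eq U_def)
      also have "\<dots> = mat_act M (smult M) (d (Suc p0)) (n p0) (n (Suc p0)) (uf S) k"
        using True c by (simp add: mat_act_def)
      also have "\<dots> = z S p k" using uf[of S] True c by (simp add: v_def)
      finally show ?thesis using c by simp
    next
      case c: False
      have "(\<Oplus>\<^bsub>M\<^esub> k'\<in>{..<n (Suc p)}. d (Suc p) k k' \<odot>\<^bsub>M\<^esub> U S (Suc p) k') = (\<Oplus>\<^bsub>M\<^esub> k'\<in>{..<n (Suc p)}. \<zero>\<^bsub>M\<^esub>)"
        by (intro M.finsum_cong'[OF refl]) (use True c in \<open>auto simp: U_def dc\<close>)
      then have "D U S p k = \<zero>\<^bsub>M\<^esub>" using True kz by (simp add: Dt_eq)
      then show ?thesis using c by (simp only: if_False)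
    qed
  qed
  define z' where "z' = (\<lambda>S p k. z S p k \<oplus>\<^bsub>M\<^esub> \<ominus>\<^bsub>M\<^esub> D U S p k)"
  have DUc: "\<And>S p k. D U S p k \<in> carrier M" by (rule Dt_closed[OF Uc])
  have z'1: "z' \<in> tvec M s n N" unfolding z'_def
    by (intro tvec_add z tvec_neg Dt_tvec U)
  have z'2: "D z' S p k = \<zero>\<^bsub>M\<^esub>" for S p k
  proof -
    have "D z' S p k = D z S p k \<oplus>\<^bsub>M\<^esub> D (\<lambda>S p k. \<ominus>\<^bsub>M\<^esub> D U S p k) S p k"
      unfolding z'_def by (rule Dt_add) (use zc DUc in auto)
    also have "\<dots> = \<zero>\<^bsub>M\<^esub>" using cyc DUc by (simp add: Dt_neg Dt_Dt Uc)
    finally show ?thesis .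
  qed
  have z'3: "z' S p k \<noteq> \<zero>\<^bsub>M\<^esub> \<longrightarrow> card S < q" for S p k
  proof
    assume nz: "z' S p k \<noteq> \<zero>\<^bsub>M\<^esub>"
    show "card S < q"
    proof (rule ccontr)
      assume "\<not> card S < q"
      then have qS: "q \<le> card S" by simp
    show False
    proof (cases "card S = q \<and> p = p0")
      case True
      then have "z' S p k = \<zero>\<^bsub>M\<^esub>" unfolding z'_def DU[OF qS] using zc by (simp add: M.r_neg)
      then show ?thesis using nz by simp
    next
      case False
      then have zz: "z S p k \<noteq> \<zero>\<^bsub>M\<^esub>" using nz zc unfolding z'_def DU[OF qS] by auto
      then have "card S < Suc q" "card S + p = N" using lev zs by blast+
      then show ?thesis using False qN qS by (auto simp: p0_def)
    qed
    qed
  qed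
  show ?thesis using U z'1 z'2 z'3 unfolding z'_def by blast
qed

lemma Z1_ind:
  "\<forall>z. z \<in> tvec M s n N \<longrightarrow> (\<forall>S p k. D z S p k = \<zero>\<^bsub>M\<^esub>) \<longrightarrow> (\<forall>S p k. z S p k \<noteq> \<zero>\<^bsub>M\<^esub> \<longrightarrow> card S < q)
     \<longrightarrow> (\<exists>u \<in> tvec M s n (Suc N). \<forall>S p k. z S p k = D u S p k)"
proof (induction q)
  case 0
  show ?case
  proof (intro allI impI)
    fix z assume "z \<in> tvec M s n N" "\<forall>S p k. z S p k \<noteq> \<zero>\<^bsub>M\<^esub> \<longrightarrow> card S < 0"
    then have "\<And>S p k. z S p k = \<zero>\<^bsub>M\<^esub>" by blast
    then show "\<exists>u \<in> tvec M s n (Suc N). \<forall>S p k. z S p k = D u S p k"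
      using tvec_zero Dt_zero by metis
  qed
next
  case (Suc q)
  show ?case
  proof (intro allI impI)
    fix z assume z: "z \<in> tvec M s n N" and cyc: "\<forall>S p k. D z S p k = \<zero>\<^bsub>M\<^esub>"
      and lev: "\<forall>S p k. z S p k \<noteq> \<zero>\<^bsub>M\<^esub> \<longrightarrow> card S < Suc q"
    show "\<exists>u \<in> tvec M s n (Suc N). \<forall>S p k. z S p k = D u S p k"
    proof (cases "q \<le> N")
      case False
      have "\<forall>S p k. z S p k \<noteq> \<zero>\<^bsub>M\<^esub> \<longrightarrow> card S < q"
        using False tvec_supp[OF z] by fastforce
      then show ?thesis using Suc.IH z cyc by blast
    next
      case True
      obtain U where U: "U \<in> tvec M s n (Suc N)"
        and z': "(\<lambda>S p k. z S p k \<oplus>\<^bsub>M\<^esub> \<ominus>\<^bsub>M\<^esub> D U S p k) \<in> tvec M s n N"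
        "\<forall>S p k. D (\<lambda>S p k. z S p k \<oplus>\<^bsub>M\<^esub> \<ominus>\<^bsub>M\<^esub> D U S p k) S p k = \<zero>\<^bsub>M\<^esub>"
        "\<forall>S p k. z S p k \<oplus>\<^bsub>M\<^esub> \<ominus>\<^bsub>M\<^esub> D U S p k \<noteq> \<zero>\<^bsub>M\<^esub> \<longrightarrow> card S < q"
        using Z1_step[OF z _ _ True] cyc lev by blast
      obtain u' where u': "u' \<in> tvec M s n (Suc N)"
        "\<forall>S p k. z S p k \<oplus>\<^bsub>M\<^esub> \<ominus>\<^bsub>M\<^esub> D U S p k = D u' S p k"
        using Suc.IH z' by blast
      have Uc: "\<And>S p k. U S p k \<in> carrier M" using U by (rule tvec_carrier)
      have uc: "\<And>S p k. u' S p k \<in> carrier M" using u'(1) by (rule tvec_carrier)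
      have zc: "\<And>S p k. z S p k \<in> carrier M" using z by (rule tvec_carrier)
      have "z S p k = D (\<lambda>S p k. U S p k \<oplus>\<^bsub>M\<^esub> u' S p k) S p k" for S p k
      proof -
        have "D (\<lambda>S p k. U S p k \<oplus>\<^bsub>M\<^esub> u' S p k) S p k = D U S p k \<oplus>\<^bsub>M\<^esub> (z S p k \<oplus>\<^bsub>M\<^esub> \<ominus>\<^bsub>M\<^esub> D U S p k)"
          using u'(2) by (simp add: Dt_add Uc uc)
        also have "\<dots> = z S p k \<oplus>\<^bsub>M\<^esub> (D U S p k \<oplus>\<^bsub>M\<^esub> \<ominus>\<^bsub>M\<^esub> D U S p k)"
          using Dt_closed[OF Uc] zc by (simp add: M.a_lcomm)
        also have "\<dots> = z S p k" using Dt_closed[OF Uc] zc by (simp add: M.r_neg)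
        finally show ?thesis by simp
      qed
      then show ?thesis using tvec_add[OF U u'(1)] by blast
    qed
  qed
qed

lemma T_acyclic:
  assumes z: "z \<in> tvec M s n N" and cyc: "\<And>S p k. D z S p k = \<zero>\<^bsub>M\<^esub>"
  shows "\<exists>u \<in> tvec M s n (Suc N). \<forall>S p k. z S p k = D u S p k"
proof -
  have "\<forall>S p k. z S p k \<noteq> \<zero>\<^bsub>M\<^esub> \<longrightarrow> card S < Suc N"
    using tvec_supp[OF z] by fastforce
  then show ?thesis using Z1_ind[of N "Suc N"] z cyc by blast
qed

end

context module begin
lemma sgm_eq_zero: assumes "m \<in> carrier M" "sgm M b m = \<zero>\<^bsub>M\<^esub>" shows "m = \<zero>\<^bsub>M\<^esub>"
proof (cases b)
  case True then show ?thesis using assms by (simp add: sgm_def)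
next
  case False
  then have "\<ominus>\<^bsub>M\<^esub> m = \<zero>\<^bsub>M\<^esub>" using assms by (simp add: sgm_def)
  then have "\<ominus>\<^bsub>M\<^esub> (\<ominus>\<^bsub>M\<^esub> m) = \<zero>\<^bsub>M\<^esub>" by simp
  then show ?thesis using assms by (simp add: M.minus_minus)
qed
end

context res begin

definition "cycP N \<longleftrightarrow> (\<forall>c. c \<in> cvec M s N \<longrightarrow> (\<forall>T. kd M s x c T = \<zero>\<^bsub>M\<^esub>) \<longrightarrow>
    (\<exists>b \<in> cvec M s (Suc N). \<forall>T. c T = kd M s x b T))"

lemma cvec_carrier: "c \<in> cvec M s q \<Longrightarrow> c S \<in> carrier M"
  unfolding cvec_def by blast

lemma cvec_supp: "c \<in> cvec M s q \<Longrightarrow> c S \<noteq> \<zero>\<^bsub>M\<^esub> \<Longrightarrow> S \<subseteq> {..<s} \<and> card S = q"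
  unfolding cvec_def by blast

lemma Z2_step:
  assumes IH: "cycP q" and qn: "q < nn"
    and w: "w \<in> tvec M s n (Suc nn)" and Dw: "\<And>S p k. D w S p k = iz S p k"
    and iz0: "\<And>S p k. p \<noteq> 0 \<Longrightarrow> iz S p k = \<zero>\<^bsub>M\<^esub>"
    and lev: "\<And>S p k. w S p k \<noteq> \<zero>\<^bsub>M\<^esub> \<Longrightarrow> q \<le> card S"
  shows "\<exists>w'. w' \<in> tvec M s n (Suc nn) \<and> (\<forall>S p k. D w' S p k = iz S p k) \<and>
     (\<forall>S p k. w' S p k \<noteq> \<zero>\<^bsub>M\<^esub> \<longrightarrow> Suc q \<le> card S)"
proof -
  define p where "p = Suc nn - q"
  have p2: "2 \<le> p" using qn by (simp add: p_def)
  have wc: "\<And>S p k. w S p k \<in> carrier M" using w by (rule tvec_carrier)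
  have ws: "\<And>S p k. w S p k \<noteq> \<zero>\<^bsub>M\<^esub> \<Longrightarrow> S \<subseteq> {..<s} \<and> card S + p = Suc nn \<and> k < n p"
    using w by (rule tvec_supp)
  define c where "c k = (\<lambda>S. w S p k)" for k
  have cv: "c k \<in> cvec M s q" for k
  proof -
    have "S \<subseteq> {..<s} \<and> card S = q" if "w S p k \<noteq> \<zero>\<^bsub>M\<^esub>" for S
    proof -
      have "S \<subseteq> {..<s}" "card S + p = Suc nn" using ws[OF that] by blast+
      then show ?thesis using qn by (simp add: p_def)
    qed
    then show ?thesis unfolding cvec_def c_def using wc by blast
  qed
  have ccyc: "kd M s x (c k) T = \<zero>\<^bsub>M\<^esub>" for k T
  proof (cases "T \<subseteq> {..<s} \<and> k < n p")
    case False
    show ?thesis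
    proof (cases "T \<subseteq> {..<s}")
      case False then show ?thesis by (simp add: kd_def)
    next
      case True
      then have "\<not> k < n p" using False by blast
      then have "c k = (\<lambda>S. \<zero>\<^bsub>M\<^esub>)" unfolding c_def
      proof -
        assume nk: "\<not> k < n p"
        show "(\<lambda>S. w S p k) = (\<lambda>S. \<zero>\<^bsub>M\<^esub>)"
        proof
          fix S show "w S p k = \<zero>\<^bsub>M\<^esub>" using ws[of S p k] nk by blast
        qed
      qed
      then show ?thesis by (simp add: kd_zero)
    qed
  next
    case True
    have fT: "finite T" using True finite_subset by blast
    have F: "(\<Oplus>\<^bsub>M\<^esub> k'\<in>{..<n (Suc p)}. d (Suc p) k k' \<odot>\<^bsub>M\<^esub> w T (Suc p) k') = (\<Oplus>\<^bsub>M\<^esub> k'\<in>{..<n (Suc p)}. \<zero>\<^bsub>M\<^esub>)"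
    proof (intro M.finsum_cong'[OF refl])
      fix k' assume k': "k' \<in> {..<n (Suc p)}"
      have "w T (Suc p) k' = \<zero>\<^bsub>M\<^esub>"
      proof (rule ccontr)
        assume "w T (Suc p) k' \<noteq> \<zero>\<^bsub>M\<^esub>"
        then have "card T + Suc p = Suc nn" "q \<le> card T" using ws lev by blast+
        then show False using qn by (simp add: p_def)
      qed
      then show "d (Suc p) k k' \<odot>\<^bsub>M\<^esub> w T (Suc p) k' = \<zero>\<^bsub>M\<^esub>" using k' True by (simp add: dc)
    qed auto
    have "\<zero>\<^bsub>M\<^esub> = D w T p k" using Dw iz0 p2 by simp
    also have "\<dots> = sgm M (even p) (kd M s x (c k) T)"
      using True F kd_closed[OF wc] by (simp add: Dt_eq c_def)
    finally have e: "\<zero>\<^bsub>M\<^esub> = sgm M (even p) (kd M s x (c k) T)" .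
    show ?thesis by (rule sgm_eq_zero[OF kd_closed[OF cvec_carrier[OF cv]]]) (use e in simp)
  qed
  have "\<forall>k. \<exists>b. b \<in> cvec M s (Suc q) \<and> (\<forall>T. c k T = kd M s x b T)"
    using IH cv ccyc unfolding cycP_def by blast
  then have "\<exists>bf. \<forall>k. bf k \<in> cvec M s (Suc q) \<and> (\<forall>T. c k T = kd M s x (bf k) T)" by (rule choice)
  then obtain bf where bf0: "\<forall>k. bf k \<in> cvec M s (Suc q) \<and> (\<forall>T. c k T = kd M s x (bf k) T)" by blast
  have bf: "\<And>k. bf k \<in> cvec M s (Suc q)" "\<And>k T. c k T = kd M s x (bf k) T" using bf0 by blast+
  have bfc: "\<And>k S. bf k S \<in> carrier M" using bf(1) by (rule cvec_carrier)
  define u where "u S p' k = (if p' = p \<and> k < n p then sgm M (even p) (bf k S) else \<zero>\<^bsub>M\<^esub>)" for S p' k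
  have uc: "\<And>S p k. u S p k \<in> carrier M" by (simp add: u_def bfc)
  have u: "u \<in> tvec M s n (Suc (Suc nn))"
  proof -
    have "S \<subseteq> {..<s} \<and> card S + p' = Suc (Suc nn) \<and> k < n p'" if nz: "u S p' k \<noteq> \<zero>\<^bsub>M\<^esub>" for S p' k
    proof -
      have a: "p' = p" "k < n p" using nz by (auto simp: u_def split: if_splits)
      then have "bf k S \<noteq> \<zero>\<^bsub>M\<^esub>" using nz by (auto simp: u_def)
      then have "S \<subseteq> {..<s} \<and> card S = Suc q" by (rule cvec_supp[OF bf(1)])
      then show ?thesis using a qn by (simp add: p_def)
    qed
    then show ?thesis unfolding tvec_def using uc by blast
  qed
  have Duc: "\<And>S p k. D u S p k \<in> carrier M" by (rule Dt_closed[OF uc])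
  have DU: "D u S p' k = w S p' k" if cS: "card S \<le> q" for S p' k
  proof (cases "S \<subseteq> {..<s} \<and> k < n p'")
    case False
    then have "w S p' k = \<zero>\<^bsub>M\<^esub>" using ws by blast
    then show ?thesis using False by (auto simp: Dt_def)
  next
    case True
    have F: "(\<Oplus>\<^bsub>M\<^esub> k'\<in>{..<n (Suc p')}. d (Suc p') k k' \<odot>\<^bsub>M\<^esub> u S (Suc p') k') = \<zero>\<^bsub>M\<^esub>"
    proof -
      have "(\<Oplus>\<^bsub>M\<^esub> k'\<in>{..<n (Suc p')}. d (Suc p') k k' \<odot>\<^bsub>M\<^esub> u S (Suc p') k') = (\<Oplus>\<^bsub>M\<^esub> k'\<in>{..<n (Suc p')}. \<zero>\<^bsub>M\<^esub>)"
      proof (intro M.finsum_cong'[OF refl])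
        fix k' assume k': "k' \<in> {..<n (Suc p')}"
        have "u S (Suc p') k' = \<zero>\<^bsub>M\<^esub>"
        proof (rule ccontr)
          assume nz: "u S (Suc p') k' \<noteq> \<zero>\<^bsub>M\<^esub>"
          have "card S + Suc p' = Suc (Suc nn)" using tvec_supp[OF u nz] by blast
          moreover have "Suc p' = p" using nz by (rule contrapos_np) (simp add: u_def)
          ultimately have "card S + Suc p' = Suc (Suc nn)" "Suc p' = p" by blast+
          then show False using cS qn by (simp add: p_def)
        qed
        then show "d (Suc p') k k' \<odot>\<^bsub>M\<^esub> u S (Suc p') k' = \<zero>\<^bsub>M\<^esub>" using k' True by (simp add: dc)
      qed auto
      then show ?thesis by simp
    qed
    show ?thesis
    proof (cases "p' = p")
      case pp: True
      have "kd M s x (\<lambda>S'. u S' p' k) S = kd M s x (\<lambda>S'. sgm M (even p) (bf k S')) S"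
        using True pp by (simp add: u_def)
      also have "\<dots> = sgm M (even p) (c k S)" by (simp add: kd_sgm bfc bf(2))
      finally have "D u S p' k = sgm M (even p) (sgm M (even p) (w S p k))"
        using True F kd_closed[OF uc] pp by (simp add: Dt_eq c_def wc)
      then show ?thesis using pp wc by (simp add: sgm_sgm)
    next
      case pp: False
      have "kd M s x (\<lambda>S'. u S' p' k) S = \<zero>\<^bsub>M\<^esub>" using pp by (simp add: u_def kd_zero)
      then have "D u S p' k = \<zero>\<^bsub>M\<^esub>" using True F by (simp add: Dt_eq)
      moreover have "w S p' k = \<zero>\<^bsub>M\<^esub>"
      proof (rule ccontr)
        assume "w S p' k \<noteq> \<zero>\<^bsub>M\<^esub>"
        then have h: "card S + p' = Suc nn" "q \<le> card S" using ws[of S p' k] lev[of S p' k] by blast+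
        have "p' = p" unfolding p_def using h cS by linarith
        then show False using pp by blast
      qed
      ultimately show ?thesis by simp
    qed
  qed
  define w' where "w' = (\<lambda>S p k. w S p k \<oplus>\<^bsub>M\<^esub> \<ominus>\<^bsub>M\<^esub> D u S p k)"
  have w'1: "w' \<in> tvec M s n (Suc nn)" unfolding w'_def by (rule tvec_add[OF w tvec_neg[OF Dt_tvec[OF u]]])
  have w'2: "D w' S p' k = iz S p' k" for S p' k
  proof -
    have "D w' S p' k = D w S p' k \<oplus>\<^bsub>M\<^esub> D (\<lambda>S p k. \<ominus>\<^bsub>M\<^esub> D u S p k) S p' k"
      unfolding w'_def by (rule Dt_add) (use wc Duc in auto)
    also have "\<dots> = D w S p' k" using Duc Dt_closed[OF wc] by (simp add: Dt_neg Dt_Dt uc)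
    finally show ?thesis using Dw by simp
  qed
  have w'3: "w' S p' k \<noteq> \<zero>\<^bsub>M\<^esub> \<longrightarrow> Suc q \<le> card S" for S p' k
  proof
    assume nz: "w' S p' k \<noteq> \<zero>\<^bsub>M\<^esub>"
    show "Suc q \<le> card S"
    proof (rule ccontr)
      assume "\<not> Suc q \<le> card S"
      then have "card S \<le> q" by simp
      then have "D u S p' k = w S p' k" by (rule DU)
      then have "w' S p' k = \<zero>\<^bsub>M\<^esub>" unfolding w'_def using wc by (simp add: M.r_neg)
      then show False using nz by simp
    qed
  qed
  show ?thesis using w'1 w'2 w'3 by blast
qed

end

context res begin

lemma Z2_iter:
  assumes IH: "\<And>q. q < nn \<Longrightarrow> cycP q"
    and w0: "w0 \<in> tvec M s n (Suc nn)" and Dw0: "\<And>S p k. D w0 S p k = iz S p k"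
    and iz0: "\<And>S p k. p \<noteq> 0 \<Longrightarrow> iz S p k = \<zero>\<^bsub>M\<^esub>"
  shows "q \<le> nn \<Longrightarrow> \<exists>w. w \<in> tvec M s n (Suc nn) \<and> (\<forall>S p k. D w S p k = iz S p k) \<and>
     (\<forall>S p k. w S p k \<noteq> \<zero>\<^bsub>M\<^esub> \<longrightarrow> q \<le> card S)"
proof (induction q)
  case 0 then show ?case using w0 Dw0 by blast
next
  case (Suc q)
  then obtain w where w: "w \<in> tvec M s n (Suc nn)" "\<forall>S p k. D w S p k = iz S p k"
    "\<forall>S p k. w S p k \<noteq> \<zero>\<^bsub>M\<^esub> \<longrightarrow> q \<le> card S" by auto
  have qn: "q < nn" using Suc.prems by simp
  have Dw: "\<And>S p k. D w S p k = iz S p k" using w(2) by blast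
  have lev: "\<And>S p k. w S p k \<noteq> \<zero>\<^bsub>M\<^esub> \<Longrightarrow> q \<le> card S" using w(3) by blast
  show ?case
  proof (rule Z2_step[where q=q and nn=nn and w=w and iz=iz])
    show "cycP q" by (rule IH[OF qn])
    show "q < nn" by (rule qn)
    show "w \<in> tvec M s n (Suc nn)" by (rule w(1))
    show "\<And>S p k. D w S p k = iz S p k" by (rule Dw)
    show "\<And>S p k. p \<noteq> 0 \<Longrightarrow> iz S p k = \<zero>\<^bsub>M\<^esub>" by (rule iz0)
    show "\<And>S p k. w S p k \<noteq> \<zero>\<^bsub>M\<^esub> \<Longrightarrow> q \<le> card S" by (rule lev)
  qed
qed

lemma cycP_all: "cycP N"
proof (induction N rule: less_induct)
  case (less N)
  show ?case unfolding cycP_def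
  proof (intro allI impI)
    fix c assume cv: "c \<in> cvec M s N" and cyc: "\<forall>T. kd M s x c T = \<zero>\<^bsub>M\<^esub>"
    have cc: "\<And>S. c S \<in> carrier M" using cv by (rule cvec_carrier)
    define iz where "iz S p k = (if p = 0 \<and> k = 0 then c S else \<zero>\<^bsub>M\<^esub>)" for S and p k :: nat
    have izc: "\<And>S p k. iz S p k \<in> carrier M" by (simp add: iz_def cc)
    have iz0: "\<And>S p k. p \<noteq> 0 \<Longrightarrow> iz S p k = \<zero>\<^bsub>M\<^esub>" by (simp add: iz_def)
    have izt: "iz \<in> tvec M s n N"
    proof -
      have "S \<subseteq> {..<s} \<and> card S + p = N \<and> k < n p" if nz: "iz S p k \<noteq> \<zero>\<^bsub>M\<^esub>" for S p k
      proof -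
        have a: "p = 0" "k = 0" using nz by (auto simp: iz_def split: if_splits)
        then have "c S \<noteq> \<zero>\<^bsub>M\<^esub>" using nz by (simp add: iz_def)
        then have "S \<subseteq> {..<s} \<and> card S = N" by (rule cvec_supp[OF cv])
        then show ?thesis using a n0 by simp
      qed
      then show ?thesis unfolding tvec_def using izc by blast
    qed
    have Diz: "D iz S p k = \<zero>\<^bsub>M\<^esub>" for S p k
    proof (cases "S \<subseteq> {..<s} \<and> k < n p")
      case False then show ?thesis by (auto simp: Dt_def)
    next
      case True
      have F: "(\<Oplus>\<^bsub>M\<^esub> k'\<in>{..<n (Suc p)}. d (Suc p) k k' \<odot>\<^bsub>M\<^esub> iz S (Suc p) k') = (\<Oplus>\<^bsub>M\<^esub> k'\<in>{..<n (Suc p)}. \<zero>\<^bsub>M\<^esub>)"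
        by (intro M.finsum_cong'[OF refl]) (use True in \<open>auto simp: iz_def dc\<close>)
      have K: "kd M s x (\<lambda>S'. iz S' p k) S = \<zero>\<^bsub>M\<^esub>"
      proof (cases "p = 0 \<and> k = 0")
        case True
        then have "(\<lambda>S'. iz S' p k) = c" by (simp add: iz_def)
        then show ?thesis using cyc by simp
      next
        case False
        then have "(\<lambda>S'. iz S' p k) = (\<lambda>S'. \<zero>\<^bsub>M\<^esub>)" unfolding iz_def by (simp only: if_not_P[OF False] if_False)
        then show ?thesis by (simp add: kd_zero)
      qed
      show ?thesis using True F K by (simp add: Dt_eq)
    qed
    obtain w0 where w0: "w0 \<in> tvec M s n (Suc N)" "\<forall>S p k. iz S p k = D w0 S p k"
      using T_acyclic[OF izt Diz] by blast
    have Dw0: "\<And>S p k. D w0 S p k = iz S p k" using w0(2) by auto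
    have "\<exists>w. w \<in> tvec M s n (Suc N) \<and> (\<forall>S p k. D w S p k = iz S p k) \<and>
     (\<forall>S p k. w S p k \<noteq> \<zero>\<^bsub>M\<^esub> \<longrightarrow> N \<le> card S)"
    proof (rule Z2_iter[where nn=N and iz=iz and q=N])
      show "\<And>q. q < N \<Longrightarrow> cycP q" by (rule less.IH)
      show "w0 \<in> tvec M s n (Suc N)" by (rule w0(1))
      show "\<And>S p k. D w0 S p k = iz S p k" by (rule Dw0)
      show "\<And>S p k. p \<noteq> 0 \<Longrightarrow> iz S p k = \<zero>\<^bsub>M\<^esub>" by (rule iz0)
    qed simp
    then obtain w where w: "w \<in> tvec M s n (Suc N)" "\<forall>S p k. D w S p k = iz S p k"
      "\<forall>S p k. w S p k \<noteq> \<zero>\<^bsub>M\<^esub> \<longrightarrow> N \<le> card S" by blast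
    have wc: "\<And>S p k. w S p k \<in> carrier M" using w(1) by (rule tvec_carrier)
    have ws: "\<And>S p k. w S p k \<noteq> \<zero>\<^bsub>M\<^esub> \<Longrightarrow> S \<subseteq> {..<s} \<and> card S + p = Suc N \<and> k < n p"
      using w(1) by (rule tvec_supp)
    define ck where "ck k = (\<lambda>S. w S 1 k)" for k
    have ckv: "ck k \<in> cvec M s N" for k
    proof -
      have "S \<subseteq> {..<s} \<and> card S = N" if "w S 1 k \<noteq> \<zero>\<^bsub>M\<^esub>" for S
        using ws[OF that] by simp
      then show ?thesis unfolding cvec_def ck_def using wc by blast
    qed
    have ckc: "\<And>k S. ck k S \<in> carrier M" using ckv by (rule cvec_carrier)
    have ckcyc: "kd M s x (ck k) T = \<zero>\<^bsub>M\<^esub>" for k T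
    proof (cases "T \<subseteq> {..<s} \<and> k < n 1")
      case False
      show ?thesis
      proof (cases "T \<subseteq> {..<s}")
        case False then show ?thesis by (simp add: kd_def)
      next
        case True
        then have nk: "\<not> k < n 1" using False by blast
        have "ck k = (\<lambda>S. \<zero>\<^bsub>M\<^esub>)" unfolding ck_def
        proof
          fix S show "w S 1 k = \<zero>\<^bsub>M\<^esub>" using ws[of S 1 k] nk by blast
        qed
        then show ?thesis by (simp add: kd_zero)
      qed
    next
      case True
      have F: "(\<Oplus>\<^bsub>M\<^esub> k'\<in>{..<n (Suc 1)}. d (Suc 1) k k' \<odot>\<^bsub>M\<^esub> w T (Suc 1) k') = (\<Oplus>\<^bsub>M\<^esub> k'\<in>{..<n (Suc 1)}. \<zero>\<^bsub>M\<^esub>)"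
      proof (intro M.finsum_cong'[OF refl])
        fix k' assume k': "k' \<in> {..<n (Suc 1)}"
        have "w T (Suc 1) k' = \<zero>\<^bsub>M\<^esub>"
        proof (rule ccontr)
          assume nz: "w T (Suc 1) k' \<noteq> \<zero>\<^bsub>M\<^esub>"
          then have "card T + Suc 1 = Suc N" "N \<le> card T" using ws[OF nz] w(3) by blast+
          then show False by simp
        qed
        then show "d (Suc 1) k k' \<odot>\<^bsub>M\<^esub> w T (Suc 1) k' = \<zero>\<^bsub>M\<^esub>" using k' True by (simp add: dc)
      qed auto
      have "\<zero>\<^bsub>M\<^esub> = D w T 1 k" using w(2) iz0 by simp
      also have "\<dots> = sgm M (even (1::nat)) (kd M s x (ck k) T)"
        using True F kd_closed[OF wc] by (simp add: Dt_eq ck_def)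
      finally have e: "\<zero>\<^bsub>M\<^esub> = sgm M (even (1::nat)) (kd M s x (ck k) T)" .
      show ?thesis by (rule sgm_eq_zero[OF kd_closed[OF ckc]]) (use e in simp)
    qed
    define b0 where "b0 = (\<lambda>S. w S 0 0)"
    have b0c: "\<And>S. b0 S \<in> carrier M" by (simp add: b0_def wc)
    define hs where "hs S = (\<Oplus>\<^bsub>M\<^esub> k\<in>{..<s}. hj M k (ck k) S)" for S
    have hjv: "\<And>k. k < s \<Longrightarrow> hj M k (ck k) \<in> cvec M s (Suc N)" using hj_cvec[OF ckv] by blast
    have hjc: "\<And>k S. k < s \<Longrightarrow> hj M k (ck k) S \<in> carrier M" using hjv cvec_carrier by blast
    have hsc: "\<And>S. hs S \<in> carrier M" unfolding hs_def by (intro M.finsum_closed) (use hjc in auto)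
    define b where "b S = hs S \<oplus>\<^bsub>M\<^esub> b0 S" for S
    have bv: "b \<in> cvec M s (Suc N)"
    proof -
      have "S \<subseteq> {..<s} \<and> card S = Suc N" if nz: "b S \<noteq> \<zero>\<^bsub>M\<^esub>" for S
      proof (rule ccontr)
        assume ns: "\<not> (S \<subseteq> {..<s} \<and> card S = Suc N)"
        have "hs S = (\<Oplus>\<^bsub>M\<^esub> k\<in>{..<s}. \<zero>\<^bsub>M\<^esub>)" unfolding hs_def
        proof (intro M.finsum_cong'[OF refl])
          fix k assume k: "k \<in> {..<s}"
          show "hj M k (ck k) S = \<zero>\<^bsub>M\<^esub>"
            using cvec_supp[OF hjv[of k]] k ns by auto
        qed auto
        moreover have "b0 S = \<zero>\<^bsub>M\<^esub>"
        proof (rule ccontr)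
          assume "b0 S \<noteq> \<zero>\<^bsub>M\<^esub>"
          then show False using ws[of S 0 0] ns by (simp add: b0_def)
        qed
        ultimately have "b S = \<zero>\<^bsub>M\<^esub>" by (simp add: b_def)
        then show False using nz by simp
      qed
      moreover have "b S \<in> carrier M" for S by (simp add: b_def hsc b0c)
      ultimately show ?thesis unfolding cvec_def by blast
    qed
    have "c T = kd M s x b T" for T
    proof (cases "T \<subseteq> {..<s}")
      case False
      then have "c T = \<zero>\<^bsub>M\<^esub>" using cvec_supp[OF cv] by blast
      then show ?thesis using False by (simp add: kd_def)
    next
      case True
      have e1: "c T = D w T 0 0" using w(2) by (simp add: iz_def)
      have ks: "\<And>k'. k' < n 1 \<longleftrightarrow> k' < s" by (simp add: s_eq)
      have "(\<Oplus>\<^bsub>M\<^esub> k'\<in>{..<n (Suc 0)}. d (Suc 0) 0 k' \<odot>\<^bsub>M\<^esub> w T (Suc 0) k') = (\<Oplus>\<^bsub>M\<^esub> k'\<in>{..<s}. kd M s x (hj M k' (ck k')) T)"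
      proof (rule M.finsum_cong')
        show "{..<n (Suc 0)} = {..<s}" by (simp add: s_eq)
        show "(\<lambda>k'. kd M s x (hj M k' (ck k')) T) \<in> {..<s} \<rightarrow> carrier M" using kd_closed hjc by blast
        fix k' assume k': "k' \<in> {..<s}"
        have "kd M s x (hj M k' (ck k')) T = x k' \<odot>\<^bsub>M\<^esub> ck k' T"
          by (rule kd_hj[OF ckv]) (use k' ckcyc in auto)
        then show "d (Suc 0) 0 k' \<odot>\<^bsub>M\<^esub> w T (Suc 0) k' = kd M s x (hj M k' (ck k')) T"
          by (simp add: x_eq ck_def)
      qed
      also have "\<dots> = kd M s x hs T" unfolding hs_def
        by (rule kd_finsum[symmetric]) (use hjc in auto)
      finally have F: "(\<Oplus>\<^bsub>M\<^esub> k'\<in>{..<n (Suc 0)}. d (Suc 0) 0 k' \<odot>\<^bsub>M\<^esub> w T (Suc 0) k') = kd M s x hs T" .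
      have "D w T 0 0 = kd M s x hs T \<oplus>\<^bsub>M\<^esub> kd M s x b0 T"
        using True n0 F by (simp add: Dt_eq b0_def)
      also have "\<dots> = kd M s x b T" unfolding b_def by (rule kd_add[symmetric]) (use hsc b0c in auto)
      finally show ?thesis using e1 by simp
    qed
    then show "\<exists>b \<in> cvec M s (Suc N). \<forall>T. c T = kd M s x b T" using bv by blast
  qed
qed

end

lemma (in ring) unit_vecs: "k < N \<Longrightarrow> (\<lambda>t. if t = k then \<one> else \<zero>) \<in> vecs R N"
  unfolding vecs_def by auto

lemma (in ring) unit_mat:
  assumes "k < N" "j < p" "\<And>t. t < N \<Longrightarrow> A j t \<in> carrier R"
  shows "mat_act R (\<otimes>) A p N (\<lambda>t. if t = k then \<one> else \<zero>) j = A j k"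
proof -
  have "(\<Oplus>t\<in>{..<N}. A j t \<otimes> (if t = k then \<one> else \<zero>)) = (\<Oplus>t\<in>{..<N}. if k = t then A j t else \<zero>)"
    by (intro add.finprod_cong') (use assms in auto)
  also have "\<dots> = A j k" by (rule add.finprod_singleton) (use assms in auto)
  finally show ?thesis using assms by (simp add: mat_act_def)
qed

theorem lemma3p1:
  fixes R :: "('a, 'c) ring_scheme" and I :: "'a set" and M :: "('a, 'b, 'd) module_scheme"
  assumes "cring R" and "noetherian_ring R"
    and "ideal I R"
    and "module R M"
    and "Tor_all_vanish R I M"
  shows "\<forall>f\<in>Hom_quot R I M. \<forall>x\<in>carrier (R Quot I). f x = \<zero>\<^bsub>M\<^esub>"
proof -
  interpret module R M by (rule assms(4))
  interpret I: ideal I R by (rule assms(3))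
  obtain n d where fr: "finite_free_resolution R I n d" and tz: "\<forall>i. Tor_zero_wrt R M n d i"
    using assms(5) unfolding Tor_all_vanish_def by blast
  have n0: "n 0 = 1"
    and dcl: "\<forall>i\<ge>1. \<forall>j<n (i - 1). \<forall>k<n i. d i j k \<in> carrier R"
    and im1: "mat_act R (\<otimes>\<^bsub>R\<^esub>) (d 1) 1 (n 1) ` vecs R (n 1) = {v \<in> vecs R 1. v 0 \<in> I}"
    and ex: "\<forall>i\<ge>1. {x \<in> vecs R (n i). mat_act R (\<otimes>\<^bsub>R\<^esub>) (d i) (n (i - 1)) (n i) x = (\<lambda>_. \<zero>\<^bsub>R\<^esub>)}
              = mat_act R (\<otimes>\<^bsub>R\<^esub>) (d (Suc i)) (n i) (n (Suc i)) ` vecs R (n (Suc i))"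
    using fr unfolding finite_free_resolution_def by blast+
  define s where "s = n 1"
  define x where "x j = d 1 0 j" for j
  have dc: "\<And>i j k. 1 \<le> i \<Longrightarrow> j < n (i - 1) \<Longrightarrow> k < n i \<Longrightarrow> d i j k \<in> carrier R" using dcl by blast
  have xc: "\<And>j. j < s \<Longrightarrow> x j \<in> carrier R" unfolding x_def s_def using dc[of 1 0] n0 by simp
  have dd0: "(\<Oplus>\<^bsub>R\<^esub> k'\<in>{..<n (Suc p)}. d (Suc p) j k' \<otimes>\<^bsub>R\<^esub> d (Suc (Suc p)) k' k) = \<zero>\<^bsub>R\<^esub>"
    if j: "j < n p" and k: "k < n (Suc (Suc p))" for p j k
  proof -
    define e where "e = (\<lambda>t. if t = k then \<one>\<^bsub>R\<^esub> else \<zero>\<^bsub>R\<^esub>)"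
    have ev: "e \<in> vecs R (n (Suc (Suc p)))" unfolding e_def using k by (rule unit_vecs)
    define v where "v = mat_act R (\<otimes>\<^bsub>R\<^esub>) (d (Suc (Suc p))) (n (Suc p)) (n (Suc (Suc p))) e"
    have "v \<in> {x \<in> vecs R (n (Suc p)). mat_act R (\<otimes>\<^bsub>R\<^esub>) (d (Suc p)) (n (Suc p - 1)) (n (Suc p)) x = (\<lambda>_. \<zero>\<^bsub>R\<^esub>)}"
      using ex[rule_format, of "Suc p"] ev unfolding v_def by auto
    then have "mat_act R (\<otimes>\<^bsub>R\<^esub>) (d (Suc p)) (n p) (n (Suc p)) v j = \<zero>\<^bsub>R\<^esub>" by simp
    then have "(\<Oplus>\<^bsub>R\<^esub> k'\<in>{..<n (Suc p)}. d (Suc p) j k' \<otimes>\<^bsub>R\<^esub> v k') = \<zero>\<^bsub>R\<^esub>"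
      using j by (simp add: mat_act_def)
    moreover have "(\<Oplus>\<^bsub>R\<^esub> k'\<in>{..<n (Suc p)}. d (Suc p) j k' \<otimes>\<^bsub>R\<^esub> v k')
        = (\<Oplus>\<^bsub>R\<^esub> k'\<in>{..<n (Suc p)}. d (Suc p) j k' \<otimes>\<^bsub>R\<^esub> d (Suc (Suc p)) k' k)"
    proof (intro R.finsum_cong'[OF refl])
      fix k' assume k': "k' \<in> {..<n (Suc p)}"
      have "v k' = d (Suc (Suc p)) k' k"
        unfolding v_def e_def by (rule unit_mat) (use k k' dc in auto)
      then show "d (Suc p) j k' \<otimes>\<^bsub>R\<^esub> v k' = d (Suc p) j k' \<otimes>\<^bsub>R\<^esub> d (Suc (Suc p)) k' k" by simp
    qed (use j k dc in auto)
    ultimately show ?thesis by simp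
  qed
  have tor: "\<exists>u\<in>vecs M (n (Suc p)). mat_act M (smult M) (d (Suc p)) (n p) (n (Suc p)) u = v"
    if v: "v \<in> vecs M (n p)" and cy: "1 \<le> p \<longrightarrow> mat_act M (smult M) (d p) (n (p - 1)) (n p) v = (\<lambda>_. \<zero>\<^bsub>M\<^esub>)" for p v
  proof (cases "p = 0")
    case True
    have "mat_act M (smult M) (d 1) 1 (n 1) ` vecs M (n 1) = vecs M 1"
      using tz[rule_format, of 0] unfolding Tor_zero_wrt_def by simp
    then have "v \<in> mat_act M (smult M) (d 1) 1 (n 1) ` vecs M (n 1)" using v n0 True by simp
    then obtain u where "u \<in> vecs M (n 1)" "mat_act M (smult M) (d 1) 1 (n 1) u = v" by blast
    then show ?thesis using True n0 by auto
  next
    case False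
    have "{x \<in> vecs M (n p). mat_act M (smult M) (d p) (n (p - 1)) (n p) x = (\<lambda>_. \<zero>\<^bsub>M\<^esub>)}
             = mat_act M (smult M) (d (Suc p)) (n p) (n (Suc p)) ` vecs M (n (Suc p))"
      using tz[rule_format, of p] False unfolding Tor_zero_wrt_def by simp
    moreover have "v \<in> {x \<in> vecs M (n p). mat_act M (smult M) (d p) (n (p - 1)) (n p) x = (\<lambda>_. \<zero>\<^bsub>M\<^esub>)}"
      using v cy False by simp
    ultimately show ?thesis by auto
  qed
  interpret r: res R M s x n d
  proof (unfold_locales)
    show "\<And>j. j < s \<Longrightarrow> x j \<in> carrier R" by (rule xc)
    show "n 0 = 1" by (rule n0)
    show "s = n 1" by (simp add: s_def)
    show "\<And>j. x j = d 1 0 j" by (simp add: x_def)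
    show "\<And>i j k. 1 \<le> i \<Longrightarrow> j < n (i - 1) \<Longrightarrow> k < n i \<Longrightarrow> d i j k \<in> carrier R" by (rule dc)
    show "\<And>p j k. j < n p \<Longrightarrow> k < n (Suc (Suc p)) \<Longrightarrow>
        (\<Oplus>\<^bsub>R\<^esub> k'\<in>{..<n (Suc p)}. d (Suc p) j k' \<otimes>\<^bsub>R\<^esub> d (Suc (Suc p)) k' k) = \<zero>\<^bsub>R\<^esub>" by (rule dd0)
    show "\<And>p v. v \<in> vecs M (n p) \<Longrightarrow> (1 \<le> p \<longrightarrow> mat_act M (smult M) (d p) (n (p - 1)) (n p) v = (\<lambda>_. \<zero>\<^bsub>M\<^esub>)) \<Longrightarrow>
        \<exists>u\<in>vecs M (n (Suc p)). mat_act M (smult M) (d (Suc p)) (n p) (n (Suc p)) u = v" by (rule tor)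
  qed
  have xI: "x j \<in> I" if j: "j < s" for j
  proof -
    define e where "e = (\<lambda>t. if t = j then \<one>\<^bsub>R\<^esub> else \<zero>\<^bsub>R\<^esub>)"
    have ev: "e \<in> vecs R (n 1)" unfolding e_def using j s_def by (intro unit_vecs) simp
    then have "mat_act R (\<otimes>\<^bsub>R\<^esub>) (d 1) 1 (n 1) e \<in> {v \<in> vecs R 1. v 0 \<in> I}" using im1 by blast
    moreover have "mat_act R (\<otimes>\<^bsub>R\<^esub>) (d 1) 1 (n 1) e 0 = d 1 0 j"
      unfolding e_def by (rule unit_mat) (use j s_def dc[of 1 0] n0 in auto)
    ultimately show ?thesis by (simp add: x_def)
  qed
  show ?thesis
  proof (intro ballI)
    fix f :: "'a set \<Rightarrow> 'b" and Xq :: "'a set"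
    assume f: "f \<in> Hom_quot R I M"
    assume Xq: "Xq \<in> carrier (FactRing R I)"
    have fpi: "f \<in> carrier (FactRing R I) \<rightarrow> carrier M"
      and fsm: "\<forall>r\<in>carrier R. \<forall>xa\<in>carrier (FactRing R I). f ((I +>\<^bsub>R\<^esub> r) \<otimes>\<^bsub>FactRing R I\<^esub> xa) = r \<odot>\<^bsub>M\<^esub> f xa"
      using f unfolding Hom_quot_def by blast+
    have carrQ: "carrier (FactRing R I) = (\<Union>a\<in>carrier R. {I +>\<^bsub>R\<^esub> a})"
      unfolding FactRing_def using A_RCOSETS_def'[of R I] by simp
    have inQ: "\<And>a. a \<in> carrier R \<Longrightarrow> I +>\<^bsub>R\<^esub> a \<in> carrier (FactRing R I)" unfolding carrQ by blast
    define m where "m = f (I +>\<^bsub>R\<^esub> \<one>\<^bsub>R\<^esub>)"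
    have mc: "m \<in> carrier M" unfolding m_def using fpi inQ[of "\<one>\<^bsub>R\<^esub>"] by auto
    have fr: "f (I +>\<^bsub>R\<^esub> r) = r \<odot>\<^bsub>M\<^esub> m" if r: "r \<in> carrier R" for r
    proof -
      have "(I +>\<^bsub>R\<^esub> r) \<otimes>\<^bsub>FactRing R I\<^esub> (I +>\<^bsub>R\<^esub> \<one>\<^bsub>R\<^esub>) = I +>\<^bsub>R\<^esub> (r \<otimes>\<^bsub>R\<^esub> \<one>\<^bsub>R\<^esub>)"
        unfolding FactRing_def using I.rcoset_mult_add[of r "\<one>\<^bsub>R\<^esub>"] r by simp
      then have "f (I +>\<^bsub>R\<^esub> r) = f ((I +>\<^bsub>R\<^esub> r) \<otimes>\<^bsub>FactRing R I\<^esub> (I +>\<^bsub>R\<^esub> \<one>\<^bsub>R\<^esub>))" using r by simp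
      also have "\<dots> = r \<odot>\<^bsub>M\<^esub> m" unfolding m_def using fsm r inQ[of "\<one>\<^bsub>R\<^esub>"] by simp
      finally show ?thesis .
    qed
    have f0: "f I = \<zero>\<^bsub>M\<^esub>"
    proof -
      have "I +>\<^bsub>R\<^esub> \<zero>\<^bsub>R\<^esub> = I" by (rule R.a_rcos_zero[OF assms(3) additive_subgroup.zero_closed[OF ideal.axioms(1)[OF assms(3)]]])
      then have "f I = \<zero>\<^bsub>R\<^esub> \<odot>\<^bsub>M\<^esub> m" using fr[of "\<zero>\<^bsub>R\<^esub>"] by simp
      then show ?thesis using mc by simp
    qed
    have aI: "a \<odot>\<^bsub>M\<^esub> m = \<zero>\<^bsub>M\<^esub>" if a: "a \<in> I" for a
    proof -
      have ac: "a \<in> carrier R" using a by (rule ideal.Icarr[OF assms(3)])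
      have "I +>\<^bsub>R\<^esub> a = I" by (rule R.a_rcos_zero[OF assms(3) a])
      then show ?thesis using fr[OF ac] f0 by simp
    qed
    define z where "z S = (if S = {..<s} then m else \<zero>\<^bsub>M\<^esub>)" for S
    have zv: "z \<in> cvec M s s" unfolding cvec_def z_def using mc by auto
    have zcyc: "kd M s x z T = \<zero>\<^bsub>M\<^esub>" for T
    proof (cases "T \<subseteq> {..<s}")
      case False then show ?thesis by (simp add: kd_def)
    next
      case True
      have "(\<Oplus>\<^bsub>M\<^esub> j\<in>{..<s} - T. sgm M (sg j T) (x j \<odot>\<^bsub>M\<^esub> z (insert j T))) = (\<Oplus>\<^bsub>M\<^esub> j\<in>{..<s} - T. \<zero>\<^bsub>M\<^esub>)"
      proof (intro M.finsum_cong'[OF refl])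
        fix j assume j: "j \<in> {..<s} - T"
        have "x j \<odot>\<^bsub>M\<^esub> z (insert j T) = \<zero>\<^bsub>M\<^esub>"
          using aI[OF xI] xc j by (simp add: z_def)
        then show "sgm M (sg j T) (x j \<odot>\<^bsub>M\<^esub> z (insert j T)) = \<zero>\<^bsub>M\<^esub>" by simp
      qed auto
      then show ?thesis using True by (simp add: kd_def)
    qed
    obtain b where bv: "b \<in> cvec M s (Suc s)" and zb: "\<forall>T. z T = kd M s x b T"
      using r.cycP_all[of s] zv zcyc unfolding r.cycP_def by blast
    have b0: "b S = \<zero>\<^bsub>M\<^esub>" for S
    proof (rule ccontr)
      assume "b S \<noteq> \<zero>\<^bsub>M\<^esub>"
      then have "S \<subseteq> {..<s}" "card S = Suc s" using bv unfolding cvec_def by blast+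
      moreover have "card S \<le> s" using calculation(1) by (metis card_lessThan card_mono finite_lessThan)
      ultimately show False by simp
    qed
    have "m = z {..<s}" by (simp add: z_def)
    also have "\<dots> = kd M s x b {..<s}" using zb by simp
    also have "\<dots> = kd M s x (\<lambda>S. \<zero>\<^bsub>M\<^esub>) {..<s}" by (rule r.kd_cong) (simp_all add: b0)
    also have "\<dots> = \<zero>\<^bsub>M\<^esub>" by (rule r.kd_zero)
    finally have m0: "m = \<zero>\<^bsub>M\<^esub>" .
    obtain r where r: "r \<in> carrier R" "Xq = I +>\<^bsub>R\<^esub> r" using Xq unfolding carrQ by blast
    show "f Xq = \<zero>\<^bsub>M\<^esub>" using fr[OF r(1)] r m0 by simp
  qed
qed

end
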